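(* Let $q\ge2$ be an integer, $\beta\ge0$, $c>0$ and $\kappa>0$. Writing $N=\mathcal Nq$, $$\lim_{\substack{\mathcal N\to\infty\\ K/N\to\kappa/2}}\frac1N\ln\mathbb E_{N,c}\big[\tilde Z_{(\mathcal N,q)}(\beta J)\,\big|\,|J|=K\big]=\mathcal P(\beta,\kappa,q)$$ and $$\lim_{\substack{\mathcal N\to\infty\\ K/N\to\kappa/2}}\frac1N\ln\mathbb E_{N,c}\big[\tilde Z_{(\mathcal N,q)}(\beta J)^2\,\big|\,|J|=K\big]=\max_{\mu\in\mathcal M_*([q]^2)}\phi^{(2)}(\beta,\kappa,q,\mu),$$ where $$\phi^{(2)}(\beta,\kappa,q,\mu)=s(\mu)+\frac\kappa2\ln\Big(1-\frac{2(1-e^{-\beta})}{q}+(1-e^{-\beta})^2\sum_{(r_1,r_2)\in[q]^2}\mu(\{(r_1,r_2)\})^2\Big).$$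
   Context: $[q]=\{1,\dots,q\}$. For $\sigma\in[q]^N$ and a real $N\times N$ matrix $J$, $H_N(\sigma,J)=\sum_{i,j=1}^N J_{ij}\delta(\sigma_i,\sigma_j)$ ($\delta$ Kronecker). Under $\mathbb P_{N,c}$ (expectation $\mathbb E_{N,c}$), $J$ is a random $N\times N$ matrix with independent entries each Poisson with mean $c/(2N)$; $|J|=\sum_{i,j=1}^NJ_{ij}$, and $\mathbb E_{N,c}[\,\cdot\,|\,|J|=K]$ is conditional expectation given $|J|=K$. For $N=\mathcal Nq$, the balanced configurations are $[q]^{(\mathcal N,q)}=\{\sigma\in[q]^N:\ \#\{i:\sigma_i=s\}=\mathcal N\text{ for each }s\in[q]\}$, and $\tilde Z_{(\mathcal N,q)}(\beta J)=\sum_{\sigma\in[q]^{(\mathcal N,q)}}e^{-\beta H_N(\sigma,J)}$. $\mathcal P(\beta,\kappa,q)=\ln q+\frac\kappa2\ln\big(1-\frac{1-e^{-\beta}}{q}\big)$. $\mathcal M_*([q]^2)$ is the set of probability measures on $[q]\times[q]$ both of whose marginals are uniform on $[q]$, and $s(\mu)=-\sum_{(r_1,r_2)}\mu(\{(r_1,r_2)\})\ln\mu(\{(r_1,r_2)\})$ (with $0\ln0=0$). The limits are taken along any sequences with $\mathcal N\to\infty$ and $K/N\to\kappa/2$. *)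

theory Defs
  imports "HOL-Probability.Probability"
begin

text \<open>Spins take values in [q] = {1..q}; sites are indexed by {0..<N}.
  A coupling matrix J is a function nat \<times> nat \<Rightarrow> nat, equal to 0 off {0..<N}^2.\<close>

definition sites :: "nat \<Rightarrow> nat set" where
  "sites N = {0..<N}"

definition hamiltonian :: "nat \<Rightarrow> (nat \<Rightarrow> nat) \<Rightarrow> (nat \<times> nat \<Rightarrow> nat) \<Rightarrow> real" where
  "hamiltonian N \<sigma> J = (\<Sum>i\<in>sites N. \<Sum>j\<in>sites N. real (J (i, j)) * (if \<sigma> i = \<sigma> j then 1 else 0))"

definition balanced_configs :: "nat \<Rightarrow> nat \<Rightarrow> (nat \<Rightarrow> nat) set" where
  "balanced_configs NN q =
     {\<sigma> \<in> sites (NN * q) \<rightarrow>\<^sub>E {1..q}. \<forall>s\<in>{1..q}. card {i \<in> sites (NN * q). \<sigma> i = s} = NN}"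

definition Ztilde :: "nat \<Rightarrow> nat \<Rightarrow> real \<Rightarrow> (nat \<times> nat \<Rightarrow> nat) \<Rightarrow> real" where
  "Ztilde NN q \<beta> J = (\<Sum>\<sigma>\<in>balanced_configs NN q. exp (- \<beta> * hamiltonian (NN * q) \<sigma> J))"

definition J_law :: "nat \<Rightarrow> real \<Rightarrow> (nat \<times> nat \<Rightarrow> nat) pmf" where
  "J_law N c = Pi_pmf (sites N \<times> sites N) 0 (\<lambda>_. poisson_pmf (c / (2 * real N)))"

definition total :: "nat \<Rightarrow> (nat \<times> nat \<Rightarrow> nat) \<Rightarrow> nat" where
  "total N J = (\<Sum>i\<in>sites N. \<Sum>j\<in>sites N. J (i, j))"

definition cond_exp_J :: "nat \<Rightarrow> real \<Rightarrow> nat \<Rightarrow> ((nat \<times> nat \<Rightarrow> nat) \<Rightarrow> real) \<Rightarrow> real" where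
  "cond_exp_J N c K f = measure_pmf.expectation (cond_pmf (J_law N c) {J. total N J = K}) f"

definition Pfun :: "real \<Rightarrow> real \<Rightarrow> nat \<Rightarrow> real" where
  "Pfun \<beta> \<kappa> q = ln (real q) + \<kappa> / 2 * ln (1 - (1 - exp (- \<beta>)) / real q)"

definition Mstar :: "nat \<Rightarrow> (nat \<times> nat \<Rightarrow> real) set" where
  "Mstar q = {\<mu>. (\<forall>x. 0 \<le> \<mu> x) \<and> (\<forall>x. x \<notin> {1..q} \<times> {1..q} \<longrightarrow> \<mu> x = 0)
      \<and> (\<forall>r\<in>{1..q}. (\<Sum>r2\<in>{1..q}. \<mu> (r, r2)) = 1 / real q)
      \<and> (\<forall>r\<in>{1..q}. (\<Sum>r1\<in>{1..q}. \<mu> (r1, r)) = 1 / real q)}"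

definition entropy2 :: "nat \<Rightarrow> (nat \<times> nat \<Rightarrow> real) \<Rightarrow> real" where
  "entropy2 q \<mu> = - (\<Sum>x\<in>{1..q} \<times> {1..q}. if \<mu> x = 0 then 0 else \<mu> x * ln (\<mu> x))"

definition phi2 :: "real \<Rightarrow> real \<Rightarrow> nat \<Rightarrow> (nat \<times> nat \<Rightarrow> real) \<Rightarrow> real" where
  "phi2 \<beta> \<kappa> q \<mu> = entropy2 q \<mu> + \<kappa> / 2 * ln (1 - 2 * (1 - exp (- \<beta>)) / real q
       + (1 - exp (- \<beta>))^2 * (\<Sum>x\<in>{1..q} \<times> {1..q}. (\<mu> x)^2))"

end

theory Submission
  imports Defs "HOL-Combinatorics.Multiset_Permutations" "HOL-Real_Asymp.Real_Asymp"
begin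

definition FS :: "'a set \<Rightarrow> nat \<Rightarrow> ('a \<Rightarrow> nat) set" where
  "FS A K = {J. (\<forall>x. x \<notin> A \<longrightarrow> J x = 0) \<and> sum J A = K}"

lemma FS_sub: assumes "finite A" shows "FS A K \<subseteq> (\<lambda>f x. if x \<in> A then f x else 0) ` (PiE A (\<lambda>_. {0..K}))"
proof (intro subsetI)
  fix J assume J: "J \<in> FS A K"
  show "J \<in> (\<lambda>f x. if x \<in> A then f x else 0) ` (PiE A (\<lambda>_. {0..K}))"
  proof (rule image_eqI[where x="restrict J A"])
    show "J = (\<lambda>x. if x \<in> A then restrict J A x else 0)" using J by (auto simp: FS_def)
    show "restrict J A \<in> PiE A (\<lambda>_. {0..K})"
    proof -
      have "J x \<le> K" if "x \<in> A" for x
        using J that member_le_sum[of x A J] \<open>finite A\<close> by (auto simp: FS_def)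
      thus ?thesis by auto
    qed
  qed
qed

lemma finite_FS: "finite A \<Longrightarrow> finite (FS A K)"
  by (rule finite_subset[OF FS_sub]) (auto intro!: finite_PiE)

lemma multinom:
  fixes g :: "'a \<Rightarrow> real"
  assumes "finite A"
  shows "(\<Sum>J\<in>FS A K. \<Prod>x\<in>A. g x ^ J x / fact (J x)) = (sum g A) ^ K / fact K"
  using assms
proof (induction A arbitrary: K rule: finite_induct)
  case empty
  have e0: "FS {} 0 = {\<lambda>_. 0}" by (auto simp: FS_def)
  have e1: "FS {} (Suc k) = {}" for k by (auto simp: FS_def)
  show ?case by (cases K) (simp_all only: e0 e1, simp_all)
next
  case (insert a A)
  let ?F = "\<lambda>J. \<Prod>x\<in>insert a A. g x ^ J x / fact (J x)"
  have "(\<Sum>J\<in>FS (insert a A) K. ?F J) = (\<Sum>(j,J)\<in>Sigma {0..K} (\<lambda>j. FS A (K - j)). ?F (J(a:=j)))"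
  proof (rule sum.reindex_bij_witness[where i="\<lambda>(j,J). J(a:=j)" and j="\<lambda>J. (J a, J(a:=0))"])
    fix jJ assume "jJ \<in> Sigma {0..K} (\<lambda>j. FS A (K - j))"
    then obtain j J where jJ: "jJ = (j,J)" "j \<le> K" "J \<in> FS A (K - j)" by auto
    have Ja: "J a = 0" using jJ insert by (auto simp: FS_def)
    show "(case (case jJ of (j, J) \<Rightarrow> J(a := j)) of J \<Rightarrow> (J a, J(a := 0))) = jJ"
      using jJ Ja by auto
    have "sum (J(a:=j)) A = sum J A" using insert by (intro sum.cong) auto
    thus "(case jJ of (j, J) \<Rightarrow> J(a := j)) \<in> FS (insert a A) K"
      using jJ insert by (auto simp: FS_def)
  next
    fix J assume J: "J \<in> FS (insert a A) K"
    show "(case (J a, J(a := 0)) of (j, J) \<Rightarrow> J(a := j)) = J" by auto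
    have s: "sum (J(a:=0)) A = sum J A" using insert by (intro sum.cong) auto
    have "sum J (insert a A) = J a + sum J A" using insert by simp
    thus "(J a, J(a := 0)) \<in> Sigma {0..K} (\<lambda>j. FS A (K - j))"
      using J s by (auto simp: FS_def)
  qed (auto intro!: prod.cong)
  also have "\<dots> = (\<Sum>j\<in>{0..K}. \<Sum>J\<in>FS A (K - j). ?F (J(a:=j)))"
    by (rule sum.Sigma[symmetric]) (auto intro: finite_FS insert)
  also have "\<dots> = (\<Sum>j\<in>{0..K}. g a ^ j / fact j * (\<Sum>J\<in>FS A (K - j). \<Prod>x\<in>A. g x ^ J x / fact (J x)))"
  proof (intro sum.cong refl)
    fix j J
    show "(\<Sum>J\<in>FS A (K - j). ?F (J(a:=j))) = g a ^ j / fact j * (\<Sum>J\<in>FS A (K - j). \<Prod>x\<in>A. g x ^ J x / fact (J x))"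
      unfolding sum_distrib_left
    proof (intro sum.cong refl)
      fix J
      have "(\<Prod>x\<in>A. g x ^ (J(a:=j)) x / fact ((J(a:=j)) x)) = (\<Prod>x\<in>A. g x ^ J x / fact (J x))"
        using insert by (intro prod.cong) auto
      thus "?F (J(a:=j)) = g a ^ j / fact j * (\<Prod>x\<in>A. g x ^ J x / fact (J x))"
        using insert by simp
    qed
  qed
  also have "\<dots> = (\<Sum>j\<in>{0..K}. g a ^ j / fact j * (sum g A ^ (K - j) / fact (K - j)))"
    using insert by simp
  also have "\<dots> = (\<Sum>j\<in>{0..K}. real (K choose j) * g a ^ j * sum g A ^ (K - j)) / fact K"
    unfolding sum_divide_distrib
  proof (intro sum.cong refl)
    fix j assume "j \<in> {0..K}"
    hence jK: "j \<le> K" by simp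
    have "real (K choose j) = fact K / (fact j * fact (K - j))"
      using binomial_fact[OF jK] by simp
    thus "g a ^ j / fact j * (sum g A ^ (K - j) / fact (K - j)) =
          real (K choose j) * g a ^ j * sum g A ^ (K - j) / fact K"
      by (simp add: field_simps)
  qed
  also have "\<dots> = (g a + sum g A) ^ K / fact K"
    by (simp add: binomial_ring atLeast0AtMost)
  finally show ?case using insert by simp
qed

abbreviation box :: "nat \<Rightarrow> (nat \<times> nat) set" where "box N \<equiv> sites N \<times> sites N"

lemma finite_sites[simp]: "finite (sites N)" by (simp add: sites_def)

lemma total_eq: "total N J = sum J (box N)"
  unfolding total_def by (simp add: sum.cartesian_product)

definition Wt :: "('a \<Rightarrow> nat) \<Rightarrow> 'a set \<Rightarrow> real" where
  "Wt J A = (\<Prod>x\<in>A. 1 / fact (J x))"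

lemma cond_exp_formula:
  assumes N: "N > 0" and c: "c > 0"
  shows "cond_exp_J N c K f = (\<Sum>J\<in>FS (box N) K. Wt J (box N) * f J) / (\<Sum>J\<in>FS (box N) K. Wt J (box N))"
proof -
  define p where "p = J_law N c"
  define S where "S = {J. total N J = K}"
  define l where "l = c / (2 * real N)"
  have l: "l > 0" using N c by (simp add: l_def)
  have fb: "finite (box N)" by simp
  have pmfp: "pmf p J = (if (\<forall>x. x \<notin> box N \<longrightarrow> J x = 0) then \<Prod>x\<in>box N. l ^ J x / fact (J x) * exp (- l) else 0)" for J
  proof -
    have "pmf p J = (if (\<forall>x. x \<notin> box N \<longrightarrow> J x = 0) then \<Prod>x\<in>box N. pmf (poisson_pmf l) (J x) else 0)"
      unfolding p_def J_law_def l_def by (rule pmf_Pi) simp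
    thus ?thesis by (simp only: pmf_poisson[OF l])
  qed
  define C where "C = l ^ K * exp (- l) ^ card (box N)"
  have C: "C > 0" using l by (simp add: C_def)
  have pmfF: "pmf p J = C * Wt J (box N)" if "J \<in> FS (box N) K" for J
  proof -
    have "pmf p J = (\<Prod>x\<in>box N. l ^ J x / fact (J x) * exp (- l))"
      using that by (simp add: pmfp FS_def)
    also have "\<dots> = (\<Prod>x\<in>box N. l ^ J x) * Wt J (box N) * (\<Prod>x\<in>box N. exp (- l))"
      by (simp add: Wt_def prod.distrib divide_inverse)
    also have "(\<Prod>x\<in>box N. l ^ J x) = l ^ K" using that power_sum[of l J "box N"] by (simp add: FS_def)
    finally show ?thesis by (simp add: C_def)
  qed
  define J0 where "J0 = (\<lambda>x::nat\<times>nat. if x = (0,0) then K else (0::nat))"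
  have J0box: "(0,0) \<in> box N" using N by (simp add: sites_def)
  have "total N J0 = K" unfolding total_eq J0_def using J0box by (simp add: sum.delta)
  moreover have "pmf p J0 \<noteq> 0" using J0box l by (subst pmfp) (auto simp: J0_def)
  ultimately have ne: "set_pmf p \<inter> S \<noteq> {}" by (auto simp: S_def set_pmf_iff)
  have sub: "J \<in> FS (box N) K" if "J \<in> set_pmf (cond_pmf p S)" for J
  proof -
    have "J \<in> set_pmf p" "total N J = K" using that ne by (auto simp: S_def)
    hence "pmf p J \<noteq> 0" by (simp add: set_pmf_iff)
    hence "\<forall>x. x \<notin> box N \<longrightarrow> J x = 0" by (simp add: pmfp split: if_splits)
    thus ?thesis using \<open>total N J = K\<close> by (simp add: FS_def total_eq)
  qed
  have FS_S: "J \<in> S" if "J \<in> FS (box N) K" for J using that by (simp add: FS_def S_def total_eq)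
  have E: "measure_pmf.expectation (cond_pmf p S) g = (\<Sum>J\<in>FS (box N) K. g J * (C * Wt J (box N)) / measure_pmf.prob p S)" for g
  proof -
    have "measure_pmf.expectation (cond_pmf p S) g = (\<Sum>J\<in>FS (box N) K. g J * pmf (cond_pmf p S) J)"
      by (rule integral_measure_pmf_real) (auto intro: finite_FS sub)
    also have "\<dots> = (\<Sum>J\<in>FS (box N) K. g J * (C * Wt J (box N)) / measure_pmf.prob p S)"
      by (intro sum.cong refl) (simp add: pmf_cond[OF ne] FS_S pmfF)
    finally show ?thesis .
  qed
  have m: "measure_pmf.prob p S = (\<Sum>J\<in>FS (box N) K. C * Wt J (box N))"
  proof -
    have "(1::real) = measure_pmf.expectation (cond_pmf p S) (\<lambda>_. 1)" by simp
    also have "\<dots> = (\<Sum>J\<in>FS (box N) K. C * Wt J (box N)) / measure_pmf.prob p S"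
      unfolding E by (simp add: sum_divide_distrib)
    finally show ?thesis using measure_measure_pmf_not_zero[OF ne] by (simp add: field_simps)
  qed
  have "cond_exp_J N c K f = (\<Sum>J\<in>FS (box N) K. f J * (C * Wt J (box N))) / measure_pmf.prob p S"
    unfolding cond_exp_J_def p_def[symmetric] S_def[symmetric] E by (simp add: sum_divide_distrib)
  also have "\<dots> = (C * (\<Sum>J\<in>FS (box N) K. Wt J (box N) * f J)) / (C * (\<Sum>J\<in>FS (box N) K. Wt J (box N)))"
    unfolding m by (simp add: sum_distrib_left mult_ac)
  also have "\<dots> = (\<Sum>J\<in>FS (box N) K. Wt J (box N) * f J) / (\<Sum>J\<in>FS (box N) K. Wt J (box N))"
    using C by simp
  finally show ?thesis .
qed

lemma cond_exp_prod:
  fixes g :: "'k \<Rightarrow> nat \<times> nat \<Rightarrow> real"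
  assumes N: "N > 0" and c: "c > 0"
  shows "cond_exp_J N c K (\<lambda>J. \<Sum>k\<in>I. \<Prod>x\<in>box N. g k x ^ J x) = (\<Sum>k\<in>I. (sum (g k) (box N) / real N ^ 2) ^ K)"
proof -
  have fb: "finite (box N)" by simp
  have W: "(\<Sum>J\<in>FS (box N) K. Wt J (box N)) = (real N ^ 2) ^ K / fact K"
    using multinom[OF fb, of "\<lambda>_. 1" K] by (simp add: Wt_def card_cartesian_product sites_def power2_eq_square)
  have "(\<Sum>J\<in>FS (box N) K. Wt J (box N) * (\<Sum>k\<in>I. \<Prod>x\<in>box N. g k x ^ J x))
        = (\<Sum>k\<in>I. \<Sum>J\<in>FS (box N) K. \<Prod>x\<in>box N. g k x ^ J x / fact (J x))"
    by (simp add: sum_distrib_left Wt_def prod.distrib[symmetric] sum.swap[of _ I] divide_inverse mult_ac)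
  also have "\<dots> = (\<Sum>k\<in>I. sum (g k) (box N) ^ K / fact K)"
    by (simp add: multinom[OF fb])
  finally have num: "(\<Sum>J\<in>FS (box N) K. Wt J (box N) * (\<Sum>k\<in>I. \<Prod>x\<in>box N. g k x ^ J x))
       = (\<Sum>k\<in>I. sum (g k) (box N) ^ K / fact K)" .
  have "(\<Sum>k\<in>I. sum (g k) (box N) ^ K / fact K) / ((real N ^ 2) ^ K / fact K)
      = (\<Sum>k\<in>I. (sum (g k) (box N) ^ K / fact K) / ((real N ^ 2) ^ K / fact K))"
    by (rule sum_divide_distrib)
  also have "\<dots> = (\<Sum>k\<in>I. (sum (g k) (box N) / real N ^ 2) ^ K)"
    by (intro sum.cong refl) (simp only: power_divide, use N in simp)
  finally show ?thesis unfolding cond_exp_formula[OF N c] W num .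
qed

definition gs :: "real \<Rightarrow> (nat \<Rightarrow> nat) \<Rightarrow> nat \<times> nat \<Rightarrow> real" where
  "gs \<beta> \<sigma> x = (if \<sigma> (fst x) = \<sigma> (snd x) then exp (- \<beta>) else 1)"

lemma exp_ham: "exp (- \<beta> * hamiltonian N \<sigma> J) = (\<Prod>x\<in>box N. gs \<beta> \<sigma> x ^ J x)"
proof -
  have "hamiltonian N \<sigma> J = (\<Sum>x\<in>box N. real (J x) * (if \<sigma> (fst x) = \<sigma> (snd x) then 1 else 0))"
    unfolding hamiltonian_def by (simp add: sum.cartesian_product case_prod_beta)
  hence "- \<beta> * hamiltonian N \<sigma> J = (\<Sum>x\<in>box N. real (J x) * (- \<beta> * (if \<sigma> (fst x) = \<sigma> (snd x) then 1 else 0)))"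
    by (simp add: sum_distrib_left mult_ac)
  hence "exp (- \<beta> * hamiltonian N \<sigma> J) = (\<Prod>x\<in>box N. exp (real (J x) * (- \<beta> * (if \<sigma> (fst x) = \<sigma> (snd x) then 1 else 0))))"
    by (simp add: exp_sum)
  also have "\<dots> = (\<Prod>x\<in>box N. gs \<beta> \<sigma> x ^ J x)"
    by (intro prod.cong refl) (auto simp: gs_def simp flip: exp_of_nat_mult)
  finally show ?thesis .
qed

lemma Ztilde_eq: "Ztilde NN q \<beta> = (\<lambda>J. \<Sum>\<sigma>\<in>balanced_configs NN q. \<Prod>x\<in>box (NN*q). gs \<beta> \<sigma> x ^ J x)"
  by (rule ext) (simp add: Ztilde_def exp_ham[symmetric])

lemma E1_eq:
  assumes "NN * q > 0" "c > 0"
  shows "cond_exp_J (NN*q) c K (Ztilde NN q \<beta>) =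
     (\<Sum>\<sigma>\<in>balanced_configs NN q. (sum (gs \<beta> \<sigma>) (box (NN*q)) / real (NN*q) ^ 2) ^ K)"
  unfolding Ztilde_eq by (rule cond_exp_prod[OF assms])

lemma E2_eq:
  assumes "NN * q > 0" "c > 0"
  shows "cond_exp_J (NN*q) c K (\<lambda>J. (Ztilde NN q \<beta> J)^2) =
     (\<Sum>k\<in>balanced_configs NN q \<times> balanced_configs NN q.
        (sum (\<lambda>x. gs \<beta> (fst k) x * gs \<beta> (snd k) x) (box (NN*q)) / real (NN*q) ^ 2) ^ K)"
proof -
  have "(\<lambda>J. (Ztilde NN q \<beta> J)^2) = (\<lambda>J. \<Sum>k\<in>balanced_configs NN q \<times> balanced_configs NN q.
          \<Prod>x\<in>box (NN*q). (gs \<beta> (fst k) x * gs \<beta> (snd k) x) ^ J x)"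
    unfolding Ztilde_eq power2_eq_square sum_product sum.cartesian_product
    by (simp add: power_mult_distrib prod.distrib case_prod_beta)
  thus ?thesis by (simp add: cond_exp_prod[OF assms])
qed

lemma card_filter_sum: "finite A \<Longrightarrow> (\<Sum>x\<in>A. if P x then 1 else 0 :: real) = real (card {x\<in>A. P x})"
  by (simp add: sum.inter_filter[symmetric])

lemma sq_count:
  assumes T: "finite T" and r: "\<And>i. i \<in> sites N \<Longrightarrow> \<rho> i \<in> T"
  shows "(\<Sum>x\<in>box N. if \<rho> (fst x) = \<rho> (snd x) then 1 else 0 :: real)
       = (\<Sum>t\<in>T. real (card {i\<in>sites N. \<rho> i = t}) ^ 2)"
proof -
  have "(\<Sum>x\<in>box N. if \<rho> (fst x) = \<rho> (snd x) then 1 else 0 :: real)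
      = (\<Sum>i\<in>sites N. \<Sum>j\<in>sites N. if \<rho> i = \<rho> j then 1 else 0 :: real)"
    by (simp add: sum.cartesian_product case_prod_beta)
  also have "\<dots> = (\<Sum>i\<in>sites N. \<Sum>j\<in>sites N. \<Sum>t\<in>T. (if \<rho> i = t then 1 else 0) * (if \<rho> j = t then 1 else 0 :: real))"
  proof (intro sum.cong refl)
    fix i j assume i: "i \<in> sites N"
    have "(\<Sum>t\<in>T. (if \<rho> i = t then 1 else 0) * (if \<rho> j = t then 1 else 0 :: real))
        = (\<Sum>t\<in>T. if \<rho> i = t then (if \<rho> j = t then 1 else 0) else 0 :: real)"
      by (intro sum.cong) auto
    also have "\<dots> = (if \<rho> i = \<rho> j then 1 else 0)" using T r[OF i] by (simp add: sum.delta)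
    finally show "(if \<rho> i = \<rho> j then 1 else 0) = (\<Sum>t\<in>T. (if \<rho> i = t then 1 else 0) * (if \<rho> j = t then 1 else 0 :: real))" by simp
  qed
  also have "\<dots> = (\<Sum>t\<in>T. (\<Sum>i\<in>sites N. if \<rho> i = t then 1 else 0) * (\<Sum>j\<in>sites N. if \<rho> j = t then 1 else 0 :: real))"
    by (simp add: sum_product sum.swap[of _ T])
  also have "\<dots> = (\<Sum>t\<in>T. real (card {i\<in>sites N. \<rho> i = t}) ^ 2)"
    by (simp add: card_filter_sum power2_eq_square)
  finally show ?thesis .
qed

lemma count_funs:
  fixes T :: "'a set" and m :: "'a \<Rightarrow> nat"
  assumes T: "finite T" and sm: "sum m T = N"
  shows "real (card {\<rho> \<in> {0..<N} \<rightarrow>\<^sub>E T. \<forall>t\<in>T. card {i\<in>{0..<N}. \<rho> i = t} = m t})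
         = fact N / (\<Prod>t\<in>T. fact (m t))"
proof -
  define M where "M = (\<Sum>t\<in>T. replicate_mset (m t) t)"
  have cM: "count M x = (if x \<in> T then m x else 0)" for x
    unfolding M_def count_sum using T by (simp add: sum.delta)
  have sM: "set_mset M = {x\<in>T. m x > 0}"
    by (auto simp: cM simp flip: count_greater_zero_iff split: if_splits)
  have fin: "finite {x\<in>T. 0 < m x}" using T by simp
  have size: "size M = N"
  proof -
    have "size M = sum (count M) (set_mset M)" by (rule size_multiset_overloaded_eq)
    also have "\<dots> = (\<Sum>x\<in>{x\<in>T. 0 < m x}. m x)" unfolding sM by (intro sum.cong) (auto simp: cM)
    also have "\<dots> = sum m T" using T by (simp add: sum.inter_filter, intro sum.cong, auto)
    finally show ?thesis using sm by simp
  qed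
  have pr: "(\<Prod>x\<in>set_mset M. fact (count M x)) = (\<Prod>t\<in>T. fact (m t) :: nat)"
  proof -
    have "(\<Prod>x\<in>set_mset M. fact (count M x)) = (\<Prod>x\<in>{x\<in>T. 0 < m x}. fact (m x) :: nat)"
      unfolding sM by (intro prod.cong) (auto simp: cM)
    also have "\<dots> = (\<Prod>t\<in>T. if 0 < m t then fact (m t) else 1)" using T by (simp add: prod.inter_filter)
    also have "\<dots> = (\<Prod>t\<in>T. fact (m t))" by (intro prod.cong) auto
    finally show ?thesis .
  qed
  define S where "S = {\<rho> \<in> {0..<N} \<rightarrow>\<^sub>E T. \<forall>t\<in>T. card {i\<in>{0..<N}. \<rho> i = t} = m t}"
  define f where "f = (\<lambda>\<rho>::nat \<Rightarrow> 'a. map \<rho> [0..<N])"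
  define g where "g = (\<lambda>xs::'a list. (\<lambda>i. if i < N then xs ! i else undefined))"
  have cnt: "count (mset xs) t = card {i\<in>{0..<length xs}. xs ! i = t}" for xs t
    unfolding count_mset count_list_eq_length_filter length_filter_conv_card
    by (intro arg_cong[where f=card]) auto
  have bij: "bij_betw f S (permutations_of_multiset M)"
  proof (rule bij_betw_byWitness[where f'=g])
    show "\<forall>a\<in>S. g (f a) = a"
    proof
      fix \<rho> assume "\<rho> \<in> S"
      hence "\<rho> \<in> {0..<N} \<rightarrow>\<^sub>E T" by (simp add: S_def)
      thus "g (f \<rho>) = \<rho>" by (auto simp: g_def f_def PiE_def extensional_def)
    qed
    show "\<forall>a'\<in>permutations_of_multiset M. f (g a') = a'"
    proof
      fix xs assume "xs \<in> permutations_of_multiset M"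
      hence "length xs = N" using size by (auto simp: permutations_of_multiset_def simp flip: size_mset)
      thus "f (g xs) = xs" by (auto simp: f_def g_def intro!: nth_equalityI)
    qed
    show "f ` S \<subseteq> permutations_of_multiset M"
    proof
      fix ys assume "ys \<in> f ` S"
      then obtain \<rho> where r: "\<rho> \<in> S" "ys = f \<rho>" by auto
      have "mset (f \<rho>) = M"
      proof (rule multiset_eqI)
        fix t
        have "count (mset (f \<rho>)) t = card {i\<in>{0..<N}. \<rho> i = t}"
          unfolding cnt by (simp add: f_def, intro arg_cong[where f=card], auto)
        also have "\<dots> = count M t"
        proof (cases "t \<in> T")
          case True thus ?thesis using r(1) by (simp add: S_def cM)
        next
          case False
          have "{i\<in>{0..<N}. \<rho> i = t} = {}" using r(1) False by (auto simp: S_def PiE_def)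
          thus ?thesis using False by (simp add: cM)
        qed
        finally show "count (mset (f \<rho>)) t = count M t" .
      qed
      thus "ys \<in> permutations_of_multiset M" using r by (simp add: permutations_of_multiset_def)
    qed
    show "g ` permutations_of_multiset M \<subseteq> S"
    proof
      fix \<rho> assume "\<rho> \<in> g ` permutations_of_multiset M"
      then obtain xs where xs: "mset xs = M" "\<rho> = g xs" by (auto simp: permutations_of_multiset_def)
      have len: "length xs = N" using size xs(1) by (auto simp flip: size_mset)
      have "xs ! i \<in> T" if "i < N" for i
      proof -
        have "xs ! i \<in> set xs" using that len by simp
        hence "xs ! i \<in> set_mset M" using xs(1) by auto
        thus ?thesis using sM by auto
      qed
      hence "\<rho> \<in> {0..<N} \<rightarrow>\<^sub>E T" using xs(2) by (auto simp: g_def)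
      moreover have "card {i\<in>{0..<N}. \<rho> i = t} = m t" if "t \<in> T" for t
      proof -
        have "card {i\<in>{0..<N}. \<rho> i = t} = card {i\<in>{0..<length xs}. xs ! i = t}"
          using len xs(2) by (intro arg_cong[where f=card]) (auto simp: g_def)
        also have "\<dots> = count M t" using cnt[of xs t] xs(1) by simp
        finally show ?thesis using that by (simp add: cM)
      qed
      ultimately show "\<rho> \<in> S" by (simp add: S_def)
    qed
  qed
  have "card S = card (permutations_of_multiset M)" using bij_betw_same_card[OF bij] .
  moreover have "card (permutations_of_multiset M) * (\<Prod>t\<in>T. fact (m t)) = fact N"
    using card_permutations_of_multiset_aux[of M] by (simp add: pr size)
  ultimately have "real (card S) * real (\<Prod>t\<in>T. fact (m t) :: nat) = fact N"
    by (metis of_nat_fact of_nat_mult)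
  moreover have "real (\<Prod>t\<in>T. fact (m t) :: nat) = (\<Prod>t\<in>T. fact (m t))" by simp
  moreover have "(\<Prod>t\<in>T. fact (m t) :: real) \<noteq> 0" using prod_pos[of T "\<lambda>t. fact (m t) :: real"] by simp
  ultimately show ?thesis unfolding S_def[symmetric] by (simp add: field_simps)
qed

abbreviation Q2 :: "nat \<Rightarrow> (nat \<times> nat) set" where "Q2 q \<equiv> {1..q} \<times> {1..q}"

definition ov :: "nat \<Rightarrow> (nat \<Rightarrow> nat) \<Rightarrow> (nat \<Rightarrow> nat) \<Rightarrow> nat \<times> nat \<Rightarrow> nat" where
  "ov N \<sigma> \<tau> x = card {i \<in> sites N. \<sigma> i = fst x \<and> \<tau> i = snd x}"

definition types :: "nat \<Rightarrow> nat \<Rightarrow> (nat \<times> nat \<Rightarrow> nat) set" where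
  "types NN q = {n. (\<forall>x. x \<notin> Q2 q \<longrightarrow> n x = 0) \<and> (\<forall>r\<in>{1..q}. (\<Sum>s\<in>{1..q}. n (r,s)) = NN)
                   \<and> (\<forall>s\<in>{1..q}. (\<Sum>r\<in>{1..q}. n (r,s)) = NN)}"

definition Gq :: "real \<Rightarrow> nat \<Rightarrow> (nat \<times> nat \<Rightarrow> real) \<Rightarrow> real" where
  "Gq \<beta> q \<mu> = 1 - 2 * (1 - exp (- \<beta>)) / real q + (1 - exp (- \<beta>))^2 * (\<Sum>x\<in>{1..q} \<times> {1..q}. (\<mu> x)^2)"

lemma phi2_Gq: "phi2 \<beta> \<kappa> q \<mu> = entropy2 q \<mu> + \<kappa> / 2 * ln (Gq \<beta> q \<mu>)"
  by (simp add: phi2_def Gq_def)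

lemma card_filter_nat: "finite A \<Longrightarrow> card {x\<in>A. P x} = (\<Sum>x\<in>A. if P x then 1 else 0 :: nat)"
  using sum.inter_filter[of A "\<lambda>_. 1::nat" P] by simp

lemma card_split:
  assumes S: "finite S" and T: "finite T" and r: "\<And>i. i \<in> S \<Longrightarrow> P i \<Longrightarrow> \<rho> i \<in> T"
  shows "(\<Sum>t\<in>T. card {i\<in>S. P i \<and> \<rho> i = t}) = card {i\<in>S. P i}"
proof -
  have "(\<Sum>t\<in>T. card {i\<in>S. P i \<and> \<rho> i = t}) = (\<Sum>t\<in>T. \<Sum>i\<in>S. if P i \<and> \<rho> i = t then 1 else 0)"
    using S by (simp add: card_filter_nat)
  also have "\<dots> = (\<Sum>i\<in>S. \<Sum>t\<in>T. if P i \<and> \<rho> i = t then 1 else 0)" by (rule sum.swap)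
  also have "\<dots> = (\<Sum>i\<in>S. if P i then 1 else 0)"
  proof (intro sum.cong refl)
    fix i assume i: "i \<in> S"
    show "(\<Sum>t\<in>T. if P i \<and> \<rho> i = t then 1 else 0) = (if P i then 1 else 0 :: nat)"
      using T r[OF i] by (cases "P i") (simp_all add: sum.delta)
  qed
  also have "\<dots> = card {i\<in>S. P i}" using S by (simp add: card_filter_nat)
  finally show ?thesis .
qed

lemma bal_eq: "balanced_configs NN q = {\<rho> \<in> {0..<NN*q} \<rightarrow>\<^sub>E {1..q}. \<forall>t\<in>{1..q}. card {i\<in>{0..<NN*q}. \<rho> i = t} = NN}"
  by (simp add: balanced_configs_def sites_def)

lemma finite_bal: "finite (balanced_configs NN q)"
  unfolding bal_eq by (rule finite_subset[of _ "{0..<NN*q} \<rightarrow>\<^sub>E {1..q}"]) (auto intro: finite_PiE)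

lemma card_bal: "real (card (balanced_configs NN q)) = fact (NN*q) / fact NN ^ q"
proof -
  have "real (card (balanced_configs NN q)) = fact (NN*q) / (\<Prod>t\<in>{1..q}. fact NN)"
    unfolding bal_eq by (rule count_funs) auto
  thus ?thesis by simp
qed

lemma bal_range: "\<sigma> \<in> balanced_configs NN q \<Longrightarrow> i \<in> sites (NN*q) \<Longrightarrow> \<sigma> i \<in> {1..q}"
  by (auto simp: balanced_configs_def)

lemma bal_card: "\<sigma> \<in> balanced_configs NN q \<Longrightarrow> r \<in> {1..q} \<Longrightarrow> card {i\<in>sites (NN*q). \<sigma> i = r} = NN"
  by (auto simp: balanced_configs_def)

lemma ov_types:
  assumes "\<sigma> \<in> balanced_configs NN q" "\<tau> \<in> balanced_configs NN q"
  shows "ov (NN*q) \<sigma> \<tau> \<in> types NN q"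
proof -
  have z: "ov (NN*q) \<sigma> \<tau> x = 0" if "x \<notin> Q2 q" for x
  proof -
    have "{i \<in> sites (NN*q). \<sigma> i = fst x \<and> \<tau> i = snd x} = {}"
      using that bal_range[OF assms(1)] bal_range[OF assms(2)] by (cases x) auto
    thus ?thesis by (simp add: ov_def)
  qed
  have row: "(\<Sum>s\<in>{1..q}. ov (NN*q) \<sigma> \<tau> (r,s)) = NN" if "r \<in> {1..q}" for r
    unfolding ov_def using card_split[of "sites (NN*q)" "{1..q}" "\<lambda>i. \<sigma> i = r" \<tau>] bal_range[OF assms(2)]
      bal_card[OF assms(1) that] by simp
  have col: "(\<Sum>r\<in>{1..q}. ov (NN*q) \<sigma> \<tau> (r,s)) = NN" if "s \<in> {1..q}" for s
  proof -
    have "(\<Sum>r\<in>{1..q}. ov (NN*q) \<sigma> \<tau> (r,s)) = (\<Sum>r\<in>{1..q}. card {i\<in>sites (NN*q). \<tau> i = s \<and> \<sigma> i = r})"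
      unfolding ov_def by (intro sum.cong refl arg_cong[where f=card]) auto
    also have "\<dots> = NN" using card_split[of "sites (NN*q)" "{1..q}" "\<lambda>i. \<tau> i = s" \<sigma>] bal_range[OF assms(1)]
      bal_card[OF assms(2) that] by simp
    finally show ?thesis .
  qed
  show ?thesis using z row col by (simp add: types_def)
qed

lemma types_sum:
  assumes "n \<in> types NN q"
  shows "sum n (Q2 q) = NN * q"
proof -
  have "sum n (Q2 q) = (\<Sum>r\<in>{1..q}. \<Sum>s\<in>{1..q}. n (r,s))" by (simp add: sum.cartesian_product)
  also have "\<dots> = (\<Sum>r\<in>{1..q}. NN)" using assms by (intro sum.cong) (auto simp: types_def)
  finally show ?thesis by simp
qed

lemma card_pairs:
  assumes n: "n \<in> types NN q"
  shows "real (card {k\<in>balanced_configs NN q \<times> balanced_configs NN q. ov (NN*q) (fst k) (snd k) = n})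
       = fact (NN*q) / (\<Prod>x\<in>Q2 q. fact (n x))"
proof -
  define N where "N = NN * q"
  define A where "A = {k\<in>balanced_configs NN q \<times> balanced_configs NN q. ov N (fst k) (snd k) = n}"
  define B where "B = {\<rho> \<in> {0..<N} \<rightarrow>\<^sub>E Q2 q. \<forall>t\<in>Q2 q. card {i\<in>{0..<N}. \<rho> i = t} = n t}"
  define f where "f = (\<lambda>k::(nat\<Rightarrow>nat)\<times>(nat\<Rightarrow>nat). \<lambda>i. if i \<in> {0..<N} then (fst k i, snd k i) else undefined)"
  define g where "g = (\<lambda>\<rho>::nat \<Rightarrow> nat\<times>nat. (\<lambda>i. if i \<in> {0..<N} then fst (\<rho> i) else undefined,
                                             \<lambda>i. if i \<in> {0..<N} then snd (\<rho> i) else undefined))"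
  have nz: "n x = 0" if "x \<notin> Q2 q" for x using n that unfolding types_def by blast
  have bij: "bij_betw f A B"
  proof (rule bij_betw_byWitness[where f'=g])
    show "\<forall>a\<in>A. g (f a) = a"
    proof
      fix k assume "k \<in> A"
      hence "fst k \<in> {0..<N} \<rightarrow>\<^sub>E {1..q}" "snd k \<in> {0..<N} \<rightarrow>\<^sub>E {1..q}"
        by (auto simp: A_def balanced_configs_def sites_def N_def)
      thus "g (f k) = k" by (cases k) (auto simp: f_def g_def PiE_def extensional_def)
    qed
    show "\<forall>a'\<in>B. f (g a') = a'"
    proof
      fix \<rho> assume "\<rho> \<in> B"
      hence "\<rho> \<in> {0..<N} \<rightarrow>\<^sub>E Q2 q" by (simp add: B_def)
      thus "f (g \<rho>) = \<rho>" by (auto simp: f_def g_def PiE_def extensional_def)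
    qed
    show "f ` A \<subseteq> B"
    proof
      fix \<rho> assume "\<rho> \<in> f ` A"
      then obtain k where k: "k \<in> A" "\<rho> = f k" by auto
      have s: "fst k \<in> balanced_configs NN q" "snd k \<in> balanced_configs NN q" "ov N (fst k) (snd k) = n"
        using k by (auto simp: A_def)
      have "\<rho> \<in> {0..<N} \<rightarrow>\<^sub>E Q2 q" using k(2) bal_range[OF s(1)] bal_range[OF s(2)]
        by (auto simp: f_def sites_def N_def)
      moreover have "card {i\<in>{0..<N}. \<rho> i = t} = n t" for t
      proof -
        have "card {i\<in>{0..<N}. \<rho> i = t} = ov N (fst k) (snd k) t"
          unfolding ov_def using k(2) by (intro arg_cong[where f=card]) (auto simp: f_def sites_def)
        thus ?thesis using s(3) by simp
      qed
      ultimately show "\<rho> \<in> B" by (simp add: B_def)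
    qed
    show "g ` B \<subseteq> A"
    proof
      fix k assume "k \<in> g ` B"
      then obtain \<rho> where r: "\<rho> \<in> B" "k = g \<rho>" by auto
      have rP: "\<rho> \<in> {0..<N} \<rightarrow>\<^sub>E Q2 q" using r(1) by (simp add: B_def)
      have rr: "\<rho> i \<in> Q2 q" if "i < N" for i by (rule PiE_mem[OF rP]) (use that in simp)
      have rc: "card {i\<in>{0..<N}. \<rho> i = t} = n t" if "t \<in> Q2 q" for t using r(1) that by (auto simp: B_def)
      have ovk: "ov N (fst k) (snd k) t = card {i\<in>{0..<N}. \<rho> i = t}" for t
        unfolding ov_def using r(2) by (intro arg_cong[where f=card]) (auto simp: g_def sites_def prod_eq_iff)
      have ovn: "ov N (fst k) (snd k) = n"
      proof
        fix t show "ov N (fst k) (snd k) t = n t"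
        proof (cases "t \<in> Q2 q")
          case True thus ?thesis using ovk rc by simp
        next
          case False
          have "{i\<in>{0..<N}. \<rho> i = t} = {}" using rr False by auto
          thus ?thesis using ovk nz[OF False] by simp
        qed
      qed
      have b1: "fst k \<in> balanced_configs NN q"
      proof -
        have "fst k \<in> {0..<N} \<rightarrow>\<^sub>E {1..q}" using r(2) rr by (auto simp: g_def mem_Times_iff)
        moreover have "card {i\<in>{0..<N}. fst k i = t} = NN" if "t \<in> {1..q}" for t
        proof -
          have "card {i\<in>{0..<N}. fst k i = t} = (\<Sum>s\<in>{1..q}. card {i\<in>{0..<N}. fst k i = t \<and> snd k i = s})"
            using card_split[of "{0..<N}" "{1..q}" "\<lambda>i. fst k i = t" "snd k"] r(2) rr
            by (auto simp: g_def mem_Times_iff)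
          also have "\<dots> = (\<Sum>s\<in>{1..q}. n (t,s))" using ovn[symmetric]
            by (intro sum.cong refl) (simp add: ov_def sites_def)
          finally show ?thesis using n that by (simp add: types_def)
        qed
        ultimately show ?thesis unfolding bal_eq N_def by simp
      qed
      have b2: "snd k \<in> balanced_configs NN q"
      proof -
        have "snd k \<in> {0..<N} \<rightarrow>\<^sub>E {1..q}" using r(2) rr by (auto simp: g_def mem_Times_iff)
        moreover have "card {i\<in>{0..<N}. snd k i = t} = NN" if "t \<in> {1..q}" for t
        proof -
          have "card {i\<in>{0..<N}. snd k i = t} = (\<Sum>s\<in>{1..q}. card {i\<in>{0..<N}. snd k i = t \<and> fst k i = s})"
            using card_split[of "{0..<N}" "{1..q}" "\<lambda>i. snd k i = t" "fst k"] r(2) rr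
            by (auto simp: g_def mem_Times_iff)
          also have "\<dots> = (\<Sum>s\<in>{1..q}. n (s,t))" using ovn[symmetric]
            by (intro sum.cong refl) (auto simp: ov_def sites_def intro!: arg_cong[where f=card])
          finally show ?thesis using n that by (simp add: types_def)
        qed
        ultimately show ?thesis unfolding bal_eq N_def by simp
      qed
      show "k \<in> A" using b1 b2 ovn by (simp add: A_def mem_Times_iff)
    qed
  qed
  have "real (card A) = real (card B)" using bij_betw_same_card[OF bij] by simp
  also have "\<dots> = fact N / (\<Prod>x\<in>Q2 q. fact (n x))"
    unfolding B_def by (rule count_funs) (use types_sum[OF n] in \<open>simp_all add: N_def\<close>)
  finally show ?thesis by (simp add: A_def N_def)
qed

lemma gs_alt: "gs \<beta> \<sigma> x = 1 - (1 - exp (- \<beta>)) * (if \<sigma> (fst x) = \<sigma> (snd x) then 1 else 0)"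
  by (simp add: gs_def)

lemma card_box: "card (box N) = N * N" by (simp add: sites_def)

lemma sum_delta_bal:
  assumes "\<sigma> \<in> balanced_configs NN q"
  shows "(\<Sum>x\<in>box (NN*q). if \<sigma> (fst x) = \<sigma> (snd x) then 1 else 0 :: real) = real q * real NN ^ 2"
proof -
  have "(\<Sum>x\<in>box (NN*q). if \<sigma> (fst x) = \<sigma> (snd x) then 1 else 0 :: real)
      = (\<Sum>t\<in>{1..q}. real (card {i\<in>sites (NN*q). \<sigma> i = t}) ^ 2)"
    by (rule sq_count) (use bal_range[OF assms] in auto)
  also have "\<dots> = (\<Sum>t\<in>{1..q}. real NN ^ 2)" by (intro sum.cong refl) (simp add: bal_card[OF assms])
  finally show ?thesis by simp
qed

lemma E1_term:
  assumes "\<sigma> \<in> balanced_configs NN q" "NN * q > 0"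
  shows "sum (gs \<beta> \<sigma>) (box (NN*q)) / real (NN*q) ^ 2 = 1 - (1 - exp (- \<beta>)) / real q"
proof -
  have "sum (gs \<beta> \<sigma>) (box (NN*q)) = real (card (box (NN*q))) - (1 - exp (- \<beta>)) *
          (\<Sum>x\<in>box (NN*q). if \<sigma> (fst x) = \<sigma> (snd x) then 1 else 0 :: real)"
    unfolding gs_alt by (simp add: sum_subtractf sum_distrib_left)
  also have "\<dots> = real (NN*q) ^ 2 - (1 - exp (- \<beta>)) * (real q * real NN ^ 2)"
    unfolding sum_delta_bal[OF assms(1)] card_box by (simp add: power2_eq_square)
  finally show ?thesis using assms(2) by (simp add: field_simps power2_eq_square)
qed

lemma E2_term:
  assumes s: "\<sigma> \<in> balanced_configs NN q" and t: "\<tau> \<in> balanced_configs NN q" and pos: "NN * q > 0"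
  shows "sum (\<lambda>x. gs \<beta> \<sigma> x * gs \<beta> \<tau> x) (box (NN*q)) / real (NN*q) ^ 2
       = Gq \<beta> q (\<lambda>x. real (ov (NN*q) \<sigma> \<tau> x) / real (NN*q))"
proof -
  define a where "a = 1 - exp (- \<beta>)"
  define N where "N = NN * q"
  define \<rho> where "\<rho> = (\<lambda>i. (\<sigma> i, \<tau> i))"
  let ?d = "\<lambda>f x. if f (fst x) = f (snd x) then 1 else 0 :: real"
  have prod: "gs \<beta> \<sigma> x * gs \<beta> \<tau> x = 1 - a * ?d \<sigma> x - a * ?d \<tau> x + a^2 * ?d \<rho> x" for x
    unfolding gs_alt a_def[symmetric] \<rho>_def by (simp add: algebra_simps power2_eq_square)
  have sr: "(\<Sum>x\<in>box N. ?d \<rho> x) = (\<Sum>t\<in>Q2 q. real (ov N \<sigma> \<tau> t) ^ 2)"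
  proof -
    have "(\<Sum>x\<in>box N. ?d \<rho> x) = (\<Sum>t\<in>Q2 q. real (card {i\<in>sites N. \<rho> i = t}) ^ 2)"
      by (rule sq_count) (use bal_range[OF s] bal_range[OF t] in \<open>auto simp: \<rho>_def N_def\<close>)
    also have "\<dots> = (\<Sum>t\<in>Q2 q. real (ov N \<sigma> \<tau> t) ^ 2)"
      unfolding ov_def \<rho>_def by (intro sum.cong refl arg_cong[where f="\<lambda>x. real (card x) ^ 2"]) auto
    finally show ?thesis .
  qed
  have "sum (\<lambda>x. gs \<beta> \<sigma> x * gs \<beta> \<tau> x) (box N) = real (card (box N)) - a * (\<Sum>x\<in>box N. ?d \<sigma> x)
          - a * (\<Sum>x\<in>box N. ?d \<tau> x) + a^2 * (\<Sum>x\<in>box N. ?d \<rho> x)"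
    unfolding prod by (simp add: sum.distrib sum_subtractf sum_distrib_left)
  also have "\<dots> = real N ^ 2 - 2 * a * (real q * real NN ^ 2) + a^2 * (\<Sum>t\<in>Q2 q. real (ov N \<sigma> \<tau> t) ^ 2)"
    unfolding sr card_box using sum_delta_bal[OF s] sum_delta_bal[OF t] by (simp add: N_def power2_eq_square)
  finally have eq: "sum (\<lambda>x. gs \<beta> \<sigma> x * gs \<beta> \<tau> x) (box N) = \<dots>" .
  have Np: "real N > 0" using pos by (simp add: N_def)
  have "(\<Sum>t\<in>Q2 q. (real (ov N \<sigma> \<tau> t) / real N) ^ 2) = (\<Sum>t\<in>Q2 q. real (ov N \<sigma> \<tau> t) ^ 2) / real N ^ 2"
    by (simp add: power_divide sum_divide_distrib)
  hence "Gq \<beta> q (\<lambda>x. real (ov N \<sigma> \<tau> x) / real N)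
       = 1 - 2 * a / real q + a^2 * ((\<Sum>t\<in>Q2 q. real (ov N \<sigma> \<tau> t) ^ 2) / real N ^ 2)"
    by (simp add: Gq_def a_def)
  moreover have "(real N ^ 2 - 2 * a * (real q * real NN ^ 2) + a^2 * (\<Sum>t\<in>Q2 q. real (ov N \<sigma> \<tau> t) ^ 2)) / real N ^ 2
     = 1 - 2 * a / real q + a^2 * ((\<Sum>t\<in>Q2 q. real (ov N \<sigma> \<tau> t) ^ 2) / real N ^ 2)"
    using Np pos by (simp add: N_def field_simps power2_eq_square)
  ultimately show ?thesis using eq by (simp add: N_def)
qed

definition LL :: "nat \<Rightarrow> real" where "LL n = real n * ln (real n)"

lemma LL_0[simp]: "LL 0 = 0" by (simp add: LL_def)

lemma ln_step: "real n * (ln (real n + 1) - ln (real n)) \<le> 1"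
proof (cases "n = 0")
  case True thus ?thesis by simp
next
  case False
  hence n: "real n > 0" by simp
  have "ln (real n + 1) - ln (real n) = ln ((real n + 1) / real n)" using n by (simp add: ln_div)
  also have "\<dots> \<le> (real n + 1) / real n - 1" using n by (intro ln_le_minus_one) simp
  also have "\<dots> = 1 / real n" using n by (simp add: field_simps)
  finally show ?thesis using n by (simp add: field_simps)
qed

lemma LL_delta: "LL (m + 1) - LL m \<le> 1 + ln (real m + 1)"
proof -
  have "LL (m+1) - LL m = real m * (ln (real m + 1) - ln (real m)) + ln (real m + 1)"
    by (simp add: LL_def algebra_simps)
  thus ?thesis using ln_step[of m] by simp
qed

lemma ln_fact_lower: "LL n - real n \<le> ln (fact n)"
proof (induction n)
  case 0 thus ?case by simp
next
  case (Suc n)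
  have "ln (fact (Suc n) :: real) = ln (real n + 1) + ln (fact n)"
    by (simp add: ln_mult add.commute)
  moreover have "LL (Suc n) - real (Suc n) \<le> ln (real n + 1) + (LL n - real n)"
    using ln_step[of n] by (simp add: LL_def algebra_simps)
  ultimately show ?case using Suc by simp
qed

lemma ln_fact_upper: "ln (fact n) \<le> LL (n + 1) - real n"
proof (induction n)
  case 0 thus ?case by (simp add: LL_def)
next
  case (Suc n)
  have "ln (fact (Suc n) :: real) = ln (real n + 1) + ln (fact n)"
    by (simp add: ln_mult add.commute)
  moreover have "ln (real n + 1) + (LL (n + 1) - real n) \<le> LL (Suc n + 1) - real (Suc n)"
  proof -
    have p: "real n + 1 > 0" "real n + 2 > 0" by simp_all
    have "ln ((real n + 1) / (real n + 2)) \<le> (real n + 1) / (real n + 2) - 1"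
      using p by (intro ln_le_minus_one) simp
    hence "ln (real n + 1) - ln (real n + 2) \<le> - 1 / (real n + 2)"
      using p by (simp add: ln_div field_simps)
    hence "(real n + 2) * (ln (real n + 1) - ln (real n + 2)) \<le> - 1"
      using p by (simp add: field_simps)
    thus ?thesis by (simp add: LL_def algebra_simps)
  qed
  ultimately show ?case using Suc by simp
qed

lemma count_bounds:
  fixes T :: "'a set" and m :: "'a \<Rightarrow> nat"
  assumes T: "finite T" and sm: "sum m T = N"
  shows "ln (fact N / (\<Prod>t\<in>T. fact (m t))) \<ge> LL N - (\<Sum>t\<in>T. LL (m t)) - real (card T) * (1 + ln (real N + 1))"
    and "ln (fact N / (\<Prod>t\<in>T. fact (m t))) \<le> LL N - (\<Sum>t\<in>T. LL (m t)) + 1 + ln (real N + 1)"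
proof -
  have eq: "ln (fact N / (\<Prod>t\<in>T. fact (m t))) = ln (fact N) - (\<Sum>t\<in>T. ln (fact (m t) :: real))"
  proof -
    have "(\<Prod>t\<in>T. fact (m t) :: real) \<noteq> 0" using prod_pos[of T "\<lambda>t. fact (m t) :: real"] by simp
    hence "ln (fact N / (\<Prod>t\<in>T. fact (m t))) = ln (fact N) - ln (\<Prod>t\<in>T. fact (m t) :: real)"
      by (simp add: ln_div)
    also have "ln (\<Prod>t\<in>T. fact (m t) :: real) = (\<Sum>t\<in>T. ln (fact (m t)))" by (rule ln_prod[OF T]) simp
    finally show ?thesis .
  qed
  have mN: "m t \<le> N" if "t \<in> T" for t using member_le_sum[OF that, of m] T sm by simp
  have "(\<Sum>t\<in>T. ln (fact (m t))) \<le> (\<Sum>t\<in>T. LL (m t + 1) - real (m t))"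
    by (intro sum_mono ln_fact_upper)
  also have "\<dots> \<le> (\<Sum>t\<in>T. LL (m t) + (1 + ln (real N + 1)) - real (m t))"
  proof (intro sum_mono)
    fix t assume t: "t \<in> T"
    have "ln (real (m t) + 1) \<le> ln (real N + 1)" using mN[OF t] by simp
    thus "LL (m t + 1) - real (m t) \<le> LL (m t) + (1 + ln (real N + 1)) - real (m t)"
      using LL_delta[of "m t"] by linarith
  qed
  also have "\<dots> = (\<Sum>t\<in>T. LL (m t)) + real (card T) * (1 + ln (real N + 1)) - real N"
    using sm by (simp add: sum.distrib sum_subtractf flip: of_nat_sum)
  finally have u: "(\<Sum>t\<in>T. ln (fact (m t))) \<le> \<dots>" .
  have l: "(\<Sum>t\<in>T. ln (fact (m t))) \<ge> (\<Sum>t\<in>T. LL (m t)) - real N"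
  proof -
    have "(\<Sum>t\<in>T. LL (m t) - real (m t)) \<le> (\<Sum>t\<in>T. ln (fact (m t)))"
      by (intro sum_mono ln_fact_lower)
    thus ?thesis using sm by (simp add: sum_subtractf flip: of_nat_sum)
  qed
  show "ln (fact N / (\<Prod>t\<in>T. fact (m t))) \<ge> LL N - (\<Sum>t\<in>T. LL (m t)) - real (card T) * (1 + ln (real N + 1))"
    unfolding eq using u ln_fact_lower[of N] by linarith
  have "LL (N + 1) \<le> LL N + 1 + ln (real N + 1)" using LL_delta[of N] by simp
  thus "ln (fact N / (\<Prod>t\<in>T. fact (m t))) \<le> LL N - (\<Sum>t\<in>T. LL (m t)) + 1 + ln (real N + 1)"
    unfolding eq using l ln_fact_upper[of N] by linarith
qed

lemma entropy_types:
  assumes sm: "sum m (Q2 q) = N" and N: "N > 0"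
  shows "real N * entropy2 q (\<lambda>x. real (m x) / real N) = LL N - (\<Sum>x\<in>Q2 q. LL (m x))"
proof -
  have Np: "real N > 0" using N by simp
  have t: "real N * (if real (m x) / real N = 0 then 0 else real (m x) / real N * ln (real (m x) / real N))
        = LL (m x) - real (m x) * ln (real N)" for x
  proof (cases "m x = 0")
    case True thus ?thesis by simp
  next
    case False thus ?thesis using Np by (simp add: LL_def ln_div algebra_simps)
  qed
  have "real N * entropy2 q (\<lambda>x. real (m x) / real N) = - (\<Sum>x\<in>Q2 q. LL (m x) - real (m x) * ln (real N))"
    unfolding entropy2_def by (simp only: mult_minus_right sum_distrib_left t)
  also have "\<dots> = LL N - (\<Sum>x\<in>Q2 q. LL (m x))"
    using sm by (simp add: sum_subtractf LL_def flip: sum_distrib_right of_nat_sum)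
  finally show ?thesis .
qed

lemma ln_card_bal:
  assumes "NN > 0" "q > 0"
  shows "ln (real (card (balanced_configs NN q))) \<ge> real (NN*q) * ln (real q) - real q * (1 + ln (real (NN*q) + 1))"
    and "ln (real (card (balanced_configs NN q))) \<le> real (NN*q) * ln (real q) + 1 + ln (real (NN*q) + 1)"
proof -
  have cb: "real (card (balanced_configs NN q)) = fact (NN*q) / (\<Prod>t\<in>{1..q}. fact NN)"
    using card_bal by simp
  have sm: "sum (\<lambda>_. NN) {1..q} = NN * q" by simp
  have LLeq: "LL (NN*q) - (\<Sum>t\<in>{1..q}. LL NN) = real (NN*q) * ln (real q)"
    using assms by (simp add: LL_def ln_mult algebra_simps)
  show "ln (real (card (balanced_configs NN q))) \<ge> real (NN*q) * ln (real q) - real q * (1 + ln (real (NN*q) + 1))"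
    using count_bounds(1)[OF _ sm] LLeq unfolding cb by simp
  show "ln (real (card (balanced_configs NN q))) \<le> real (NN*q) * ln (real q) + 1 + ln (real (NN*q) + 1)"
    using count_bounds(2)[OF _ sm] LLeq unfolding cb by simp
qed

lemma entropy2_alt: "entropy2 q \<mu> = - (\<Sum>x\<in>Q2 q. \<mu> x * ln (\<mu> x))"
  unfolding entropy2_def by (intro arg_cong[where f=uminus] sum.cong) auto

lemma xlnx_cont: "continuous_on {0..} (\<lambda>x::real. x * ln x)"
proof -
  have "continuous (at x within {0..}) (\<lambda>x::real. x * ln x)" if "x \<in> {0..}" for x
  proof (cases "x = 0")
    case True
    have w: "at (0::real) within {0..} = at_right 0"
      unfolding at_within_def by (rule arg_cong[where f="\<lambda>S. inf (nhds 0) (principal S)"]) auto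
    have "((\<lambda>x::real. x * ln x) \<longlongrightarrow> 0) (at_right 0)" by real_asymp
    thus ?thesis using True by (simp add: continuous_within w)
  next
    case False
    hence "x > 0" using that by simp
    hence "continuous (at x) (\<lambda>x::real. x * ln x)" by (intro continuous_intros) auto
    thus ?thesis by (rule continuous_at_imp_continuous_at_within)
  qed
  thus ?thesis by (simp add: continuous_on_eq_continuous_within)
qed

lemma Mstar_nonneg: "\<mu> \<in> Mstar q \<Longrightarrow> 0 \<le> \<mu> x" unfolding Mstar_def by blast

lemma Mstar_zero: "\<mu> \<in> Mstar q \<Longrightarrow> x \<notin> Q2 q \<Longrightarrow> \<mu> x = 0" unfolding Mstar_def by blast

lemma Mstar_sum:
  assumes "\<mu> \<in> Mstar q" "q > 0"
  shows "(\<Sum>x\<in>Q2 q. \<mu> x) = 1"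
proof -
  have "(\<Sum>x\<in>Q2 q. \<mu> x) = (\<Sum>r\<in>{1..q}. \<Sum>s\<in>{1..q}. \<mu> (r,s))" by (simp add: sum.cartesian_product)
  also have "\<dots> = (\<Sum>r\<in>{1..q}. 1 / real q)" using assms(1) by (intro sum.cong) (auto simp: Mstar_def)
  finally show ?thesis using assms(2) by simp
qed

lemma Mstar_le1:
  assumes "\<mu> \<in> Mstar q" "q > 0"
  shows "\<mu> x \<le> 1"
proof (cases "x \<in> Q2 q")
  case True
  have "\<mu> x \<le> (\<Sum>x\<in>Q2 q. \<mu> x)"
    using True Mstar_nonneg[OF assms(1)] by (intro member_le_sum) auto
  thus ?thesis using Mstar_sum[OF assms] by simp
next
  case False thus ?thesis using Mstar_zero[OF assms(1)] by simp
qed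

lemma Mstar_sq:
  assumes "\<mu> \<in> Mstar q" "q > 0"
  shows "(\<Sum>x\<in>Q2 q. (\<mu> x)^2) \<le> 1" "0 \<le> (\<Sum>x\<in>Q2 q. (\<mu> x)^2)"
proof -
  have "(\<Sum>x\<in>Q2 q. (\<mu> x)^2) \<le> (\<Sum>x\<in>Q2 q. \<mu> x)"
  proof (intro sum_mono)
    fix x
    have "0 \<le> \<mu> x" "\<mu> x \<le> 1" using Mstar_nonneg[OF assms(1)] Mstar_le1[OF assms] by auto
    thus "(\<mu> x)^2 \<le> \<mu> x" by (simp add: power2_eq_square mult_left_le)
  qed
  thus "(\<Sum>x\<in>Q2 q. (\<mu> x)^2) \<le> 1" using Mstar_sum[OF assms] by simp
  show "0 \<le> (\<Sum>x\<in>Q2 q. (\<mu> x)^2)" by (intro sum_nonneg) simp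
qed

lemma G_bounds:
  assumes "\<mu> \<in> Mstar q" "q \<ge> 2" "\<beta> \<ge> 0"
  shows "exp (- \<beta>) \<le> Gq \<beta> q \<mu>" "Gq \<beta> q \<mu> \<le> 2"
proof -
  define a where "a = 1 - exp (- \<beta>)"
  have a: "0 \<le> a" "a < 1" using assms(3) by (auto simp: a_def)
  have q: "q > 0" using assms(2) by simp
  have S: "(\<Sum>x\<in>Q2 q. (\<mu> x)^2) \<le> 1" "0 \<le> (\<Sum>x\<in>Q2 q. (\<mu> x)^2)" using Mstar_sq[OF assms(1) q] by auto
  have "2 * a / real q \<le> a" using a assms(2) by (simp add: field_simps mult_left_mono)
  moreover have "0 \<le> a^2 * (\<Sum>x\<in>Q2 q. (\<mu> x)^2)" using S by simp
  ultimately show "exp (- \<beta>) \<le> Gq \<beta> q \<mu>" unfolding Gq_def a_def[symmetric] by (simp add: a_def)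
  have "a^2 * (\<Sum>x\<in>Q2 q. (\<mu> x)^2) \<le> 1 * 1" using S a by (intro mult_mono) (auto simp: power_le_one)
  moreover have "0 \<le> 2 * a / real q" using a by simp
  ultimately show "Gq \<beta> q \<mu> \<le> 2" unfolding Gq_def a_def[symmetric] by simp
qed

lemma lnG_bound:
  assumes "\<mu> \<in> Mstar q" "q \<ge> 2" "\<beta> \<ge> 0"
  shows "\<bar>ln (Gq \<beta> q \<mu>)\<bar> \<le> \<beta> + 1" "Gq \<beta> q \<mu> > 0"
proof -
  have g: "exp (- \<beta>) \<le> Gq \<beta> q \<mu>" "Gq \<beta> q \<mu> \<le> 2" using G_bounds[OF assms] by auto
  show gp: "Gq \<beta> q \<mu> > 0" using g(1) by (meson exp_gt_zero less_le_trans)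
  have "ln (Gq \<beta> q \<mu>) \<ge> - \<beta>" using g(1) gp by (metis exp_le_cancel_iff exp_ln)
  moreover have "ln (Gq \<beta> q \<mu>) \<le> ln 2" using g(2) gp by simp
  moreover have "ln (2::real) \<le> 1" using ln_le_minus_one[of 2] by simp
  ultimately show "\<bar>ln (Gq \<beta> q \<mu>)\<bar> \<le> \<beta> + 1" using assms(3) by linarith
qed

definition Ufun :: "nat \<Rightarrow> nat \<times> nat \<Rightarrow> real" where
  "Ufun q x = (if x \<in> Q2 q then 1 / real q ^ 2 else 0)"

lemma U_Mstar: "q > 0 \<Longrightarrow> Ufun q \<in> Mstar q"
  by (auto simp: Mstar_def Ufun_def power2_eq_square)

lemma coord_cont: "continuous_on S (\<lambda>\<mu>::nat\<times>nat \<Rightarrow> real. \<mu> x)"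
  by (rule continuous_on_subset[OF continuous_on_product_coordinates]) simp

lemma Mstar_closed: "closed (Mstar q)"
proof -
  have eq: "Mstar q = (\<Inter>x. {\<mu>. 0 \<le> \<mu> x}) \<inter> (\<Inter>x\<in>-Q2 q. {\<mu>. \<mu> x = 0})
     \<inter> (\<Inter>r\<in>{1..q}. {\<mu>. (\<Sum>r2\<in>{1..q}. \<mu> (r, r2)) = 1 / real q})
     \<inter> (\<Inter>r\<in>{1..q}. {\<mu>. (\<Sum>r1\<in>{1..q}. \<mu> (r1, r)) = 1 / real q})"
    unfolding Mstar_def by (intro set_eqI) (simp only: mem_Collect_eq Int_iff INT_iff Compl_iff UNIV_I simp_thms, blast)
  show ?thesis unfolding eq
    by (intro closed_Int closed_INT ballI allI closed_Collect_le closed_Collect_eq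
          continuous_intros coord_cont)
qed

lemma Mstar_compact:
  assumes "q > 0"
  shows "compact (Mstar q)"
proof -
  define S where "S = (\<lambda>x::nat\<times>nat. if x \<in> Q2 q then {0..1::real} else {0})"
  have "compactin (product_topology (\<lambda>_. euclidean) UNIV) (PiE UNIV S)"
    by (subst compactin_PiE) (auto simp: S_def)
  hence c: "compact (PiE UNIV S)" by (simp add: euclidean_product_topology)
  have "Mstar q \<subseteq> PiE UNIV S"
    using Mstar_le1[OF _ assms] by (auto simp: S_def Mstar_def)
  hence "Mstar q = PiE UNIV S \<inter> Mstar q" by blast
  thus ?thesis using compact_Int_closed[OF c Mstar_closed[of q]] by simp
qed

lemma phi2_cont_on:
  assumes "q \<ge> 2" "\<beta> \<ge> 0"
  shows "continuous_on (Mstar q) (phi2 \<beta> \<kappa> q)"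
proof -
  have e: "continuous_on (Mstar q) (\<lambda>\<mu>. entropy2 q \<mu>)"
    unfolding entropy2_alt
  proof (intro continuous_on_minus continuous_on_sum)
    fix x
    show "continuous_on (Mstar q) (\<lambda>\<mu>. \<mu> x * ln (\<mu> x))"
      by (rule continuous_on_compose2[OF xlnx_cont coord_cont]) (auto simp: Mstar_nonneg)
  qed
  have g: "continuous_on (Mstar q) (\<lambda>\<mu>. ln (Gq \<beta> q \<mu>))"
  proof (rule continuous_on_ln)
    show "continuous_on (Mstar q) (\<lambda>\<mu>. Gq \<beta> q \<mu>)"
      unfolding Gq_def by (intro continuous_intros coord_cont)
    show "\<forall>\<mu>\<in>Mstar q. Gq \<beta> q \<mu> \<noteq> 0" using lnG_bound(2)[OF _ assms] by force
  qed
  show ?thesis unfolding phi2_Gq by (intro continuous_intros e g)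
qed

lemma phi2_max:
  assumes "q \<ge> 2" "\<beta> \<ge> 0"
  shows "\<exists>\<mu>\<in>Mstar q. \<forall>\<nu>\<in>Mstar q. phi2 \<beta> \<kappa> q \<nu> \<le> phi2 \<beta> \<kappa> q \<mu>"
proof (rule continuous_attains_sup)
  show "compact (Mstar q)" using assms by (intro Mstar_compact) simp
  show "Mstar q \<noteq> {}" using U_Mstar[of q] assms by auto
  show "continuous_on (Mstar q) (phi2 \<beta> \<kappa> q)" by (rule phi2_cont_on[OF assms])
qed

lemma phi2_tendsto:
  assumes lim: "\<And>x. x \<in> Q2 q \<Longrightarrow> (\<lambda>n. p n x) \<longlonglongrightarrow> \<nu> x"
    and pn: "\<And>n x. 0 \<le> p n x" and nn: "\<And>x. 0 \<le> \<nu> x" and G: "Gq \<beta> q \<nu> > 0"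
  shows "(\<lambda>n. phi2 \<beta> \<kappa> q (p n)) \<longlonglongrightarrow> phi2 \<beta> \<kappa> q \<nu>"
proof -
  have e: "(\<lambda>n. entropy2 q (p n)) \<longlonglongrightarrow> entropy2 q \<nu>"
    unfolding entropy2_alt
  proof (intro tendsto_minus tendsto_sum)
    fix x assume x: "x \<in> Q2 q"
    show "(\<lambda>n. p n x * ln (p n x)) \<longlonglongrightarrow> \<nu> x * ln (\<nu> x)"
      using continuous_on_tendsto_compose[OF xlnx_cont lim[OF x]] pn nn by simp
  qed
  have g: "(\<lambda>n. Gq \<beta> q (p n)) \<longlonglongrightarrow> Gq \<beta> q \<nu>"
    unfolding Gq_def by (intro tendsto_intros lim) auto
  show ?thesis unfolding phi2_Gq by (intro tendsto_intros e g) (use G in simp)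
qed

lemma split_q: "(q::nat) > 0 \<Longrightarrow> {1..q} = insert q {1..<q}"
  by (rule set_eqI) (simp, linarith)

lemma sum_split_q: assumes "(q::nat) > 0" shows "(\<Sum>s\<in>{1..q}. f s) = f q + (\<Sum>s\<in>{1..<q}. f s)"
proof -
  have "(\<Sum>s\<in>{1..q}. f s) = (\<Sum>s\<in>insert q {1..<q}. f s)" using split_q[OF assms] by (rule arg_cong)
  also have "\<dots> = f q + (\<Sum>s\<in>{1..<q}. f s)" by (rule sum.insert) auto
  finally show ?thesis .
qed

lemma rounding:
  assumes nu: "\<nu> \<in> Mstar q" and q: "q > 0" and d: "\<And>x. x \<in> Q2 q \<Longrightarrow> \<delta> \<le> \<nu> x"
    and big: "real q ^ 2 \<le> real (NN * q) * \<delta>"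
  shows "\<exists>n\<in>types NN q. \<forall>x\<in>Q2 q. \<bar>real (n x) - real (NN * q) * \<nu> x\<bar> \<le> real q ^ 2"
proof -
  define RN where "RN = real (NN * q)"
  define F where "F = (\<lambda>r s. RN * \<nu> (r,s))"
  define fl where "fl = (\<lambda>r s. \<lfloor>F r s\<rfloor>)"
  define C1 where "C1 = (\<lambda>s. \<Sum>r'\<in>{1..<q}. fl r' s)"
  define S1 where "S1 = (\<lambda>r. \<Sum>s'\<in>{1..<q}. fl r s')"
  define mi where "mi = (\<lambda>r s. if r < q \<and> s < q then fl r s else if r < q then int NN - S1 r
      else if s < q then int NN - C1 s else int NN - (\<Sum>s'\<in>{1..<q}. int NN - C1 s'))"
  have RN: "RN = real NN * real q" by (simp add: RN_def)
  have rowF: "(\<Sum>s\<in>{1..q}. F r s) = real NN" if "r \<in> {1..q}" for r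
  proof -
    have "(\<Sum>s\<in>{1..q}. F r s) = RN * (\<Sum>s\<in>{1..q}. \<nu> (r,s))" by (simp add: F_def sum_distrib_left)
    also have "\<dots> = RN / real q" using nu that by (simp add: Mstar_def)
    finally show ?thesis using q by (simp add: RN)
  qed
  have colF: "(\<Sum>r\<in>{1..q}. F r s) = real NN" if "s \<in> {1..q}" for s
  proof -
    have "(\<Sum>r\<in>{1..q}. F r s) = RN * (\<Sum>r\<in>{1..q}. \<nu> (r,s))" by (simp add: F_def sum_distrib_left)
    also have "\<dots> = RN / real q" using nu that by (simp add: Mstar_def)
    finally show ?thesis using q by (simp add: RN)
  qed
  have flb: "0 \<le> F r s - of_int (fl r s)" "F r s - of_int (fl r s) < 1" for r s
    by (simp_all add: fl_def) linarith
  have cardq: "card {1..<q} = q - 1" by simp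
  have rq1: "real (q - 1) \<le> real q" by simp
  have dev_r: "of_int (mi r q) - F r q = (\<Sum>s'\<in>{1..<q}. F r s' - of_int (fl r s'))" if "r \<in> {1..<q}" for r
  proof -
    have "F r q = real NN - (\<Sum>s'\<in>{1..<q}. F r s')" using rowF[of r] that sum_split_q[OF q, of "F r"] by auto
    thus ?thesis using that by (simp add: mi_def S1_def sum_subtractf)
  qed
  have dev_c: "of_int (mi q s) - F q s = (\<Sum>r'\<in>{1..<q}. F r' s - of_int (fl r' s))" if "s \<in> {1..<q}" for s
  proof -
    have "F q s = real NN - (\<Sum>r'\<in>{1..<q}. F r' s)" using colF[of s] that sum_split_q[OF q, of "\<lambda>r. F r s"] by auto
    thus ?thesis using that by (simp add: mi_def C1_def sum_subtractf)
  qed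
  have bnd1: "0 \<le> (\<Sum>s'\<in>{1..<q}. F r s' - of_int (fl r s'))" "(\<Sum>s'\<in>{1..<q}. F r s' - of_int (fl r s')) \<le> real (q - 1)" for r
  proof -
    show "0 \<le> (\<Sum>s'\<in>{1..<q}. F r s' - of_int (fl r s'))" by (intro sum_nonneg flb)
    have "(\<Sum>s'\<in>{1..<q}. F r s' - of_int (fl r s')) \<le> (\<Sum>s'\<in>{1..<q}. 1)" by (intro sum_mono less_imp_le flb)
    thus "(\<Sum>s'\<in>{1..<q}. F r s' - of_int (fl r s')) \<le> real (q - 1)" by simp
  qed
  have bnd2: "0 \<le> (\<Sum>r'\<in>{1..<q}. F r' s - of_int (fl r' s))" "(\<Sum>r'\<in>{1..<q}. F r' s - of_int (fl r' s)) \<le> real (q - 1)" for s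
  proof -
    show "0 \<le> (\<Sum>r'\<in>{1..<q}. F r' s - of_int (fl r' s))" by (intro sum_nonneg flb)
    have "(\<Sum>r'\<in>{1..<q}. F r' s - of_int (fl r' s)) \<le> (\<Sum>r'\<in>{1..<q}. 1)" by (intro sum_mono less_imp_le flb)
    thus "(\<Sum>r'\<in>{1..<q}. F r' s - of_int (fl r' s)) \<le> real (q - 1)" by simp
  qed
  have dev_qq: "of_int (mi q q) - F q q = - (\<Sum>s'\<in>{1..<q}. of_int (mi q s') - F q s')"
  proof -
    have "F q q = real NN - (\<Sum>s'\<in>{1..<q}. F q s')" using rowF[of q] q sum_split_q[OF q, of "F q"] by auto
    moreover have "(\<Sum>s'\<in>{1..<q}. of_int (mi q s') :: real) = (\<Sum>s'\<in>{1..<q}. of_int (int NN - C1 s'))"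
      by (intro sum.cong refl) (auto simp: mi_def)
    ultimately show ?thesis by (simp add: mi_def sum_subtractf)
  qed
  have dev: "\<bar>of_int (mi r s) - F r s\<bar> \<le> real q ^ 2" if rs: "r \<in> {1..q}" "s \<in> {1..q}" for r s
  proof -
    have qq: "real (q - 1) \<le> real q ^ 2"
    proof -
      have "real q \<le> real q * real q" using q by (simp add: mult_le_cancel_left1)
      thus ?thesis using rq1 by (simp add: power2_eq_square)
    qed
    consider "r < q" "s < q" | "r < q" "s = q" | "r = q" "s < q" | "r = q" "s = q" using rs by (metis atLeastAtMost_iff nat_less_le)
    thus ?thesis
    proof cases
      case 1
      hence "of_int (mi r s) - F r s = - (F r s - of_int (fl r s))" by (simp add: mi_def)
      moreover have "1 \<le> real q ^ 2" using q by (simp add: one_le_power)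
      ultimately show ?thesis using flb[of r s] by linarith
    next
      case 2
      hence r: "r \<in> {1..<q}" using rs by simp
      show ?thesis using dev_r[OF r] bnd1[of r] 2 qq by simp
    next
      case 3
      hence s: "s \<in> {1..<q}" using rs by simp
      show ?thesis using dev_c[OF s] bnd2[of s] 3 qq by simp
    next
      case 4
      have "\<bar>(\<Sum>s'\<in>{1..<q}. of_int (mi q s') - F q s')\<bar> \<le> (\<Sum>s'\<in>{1..<q}. real (q - 1))"
      proof -
        have "\<bar>(\<Sum>s'\<in>{1..<q}. of_int (mi q s') - F q s')\<bar> = (\<Sum>s'\<in>{1..<q}. of_int (mi q s') - F q s')"
          by (intro abs_of_nonneg sum_nonneg) (metis dev_c bnd2(1))
        also have "\<dots> \<le> (\<Sum>s'\<in>{1..<q}. real (q - 1))"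
          by (intro sum_mono) (metis dev_c bnd2(2))
        finally show ?thesis .
      qed
      also have "\<dots> = real (q - 1) * real (q - 1)" using q by (simp add: of_nat_diff)
      also have "\<dots> \<le> real q ^ 2" using rq1 by (simp add: power2_eq_square mult_mono)
      finally show ?thesis using dev_qq 4 by simp
    qed
  qed
  have mi_nn: "0 \<le> mi r s" if "r \<in> {1..q}" "s \<in> {1..q}" for r s
  proof -
    have "F r s \<ge> RN * \<delta>" using d[of "(r,s)"] that by (simp add: F_def RN_def mult_left_mono)
    hence "F r s \<ge> real q ^ 2" using big by (simp add: RN_def)
    thus ?thesis using dev[OF that] by linarith
  qed
  have row: "(\<Sum>s\<in>{1..q}. mi r s) = int NN" if "r \<in> {1..q}" for r
  proof (cases "r < q")
    case True
    have "(\<Sum>s\<in>{1..q}. mi r s) = mi r q + (\<Sum>s\<in>{1..<q}. mi r s)" by (rule sum_split_q[OF q])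
    also have "(\<Sum>s\<in>{1..<q}. mi r s) = S1 r" unfolding S1_def using True by (intro sum.cong) (auto simp: mi_def)
    finally show ?thesis using True by (simp add: mi_def)
  next
    case False
    hence rq: "r = q" using that by simp
    have "(\<Sum>s\<in>{1..q}. mi r s) = mi q q + (\<Sum>s\<in>{1..<q}. mi q s)" unfolding rq by (rule sum_split_q[OF q])
    also have "(\<Sum>s\<in>{1..<q}. mi q s) = (\<Sum>s'\<in>{1..<q}. int NN - C1 s')" by (intro sum.cong) (auto simp: mi_def)
    finally show ?thesis by (simp add: mi_def)
  qed
  have col: "(\<Sum>r\<in>{1..q}. mi r s) = int NN" if "s \<in> {1..q}" for s
  proof (cases "s < q")
    case True
    have "(\<Sum>r\<in>{1..q}. mi r s) = mi q s + (\<Sum>r\<in>{1..<q}. mi r s)" by (rule sum_split_q[OF q])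
    also have "(\<Sum>r\<in>{1..<q}. mi r s) = C1 s" unfolding C1_def using True by (intro sum.cong) (auto simp: mi_def)
    finally show ?thesis using True by (simp add: mi_def)
  next
    case False
    hence sq: "s = q" using that by simp
    have "(\<Sum>r\<in>{1..q}. mi r s) = mi q q + (\<Sum>r\<in>{1..<q}. mi r q)" unfolding sq by (rule sum_split_q[OF q])
    also have "(\<Sum>r\<in>{1..<q}. mi r q) = (\<Sum>r\<in>{1..<q}. int NN - S1 r)" by (intro sum.cong) (auto simp: mi_def)
    also have "(\<Sum>r\<in>{1..<q}. int NN - S1 r) = (\<Sum>s'\<in>{1..<q}. int NN - C1 s')"
      unfolding S1_def C1_def by (simp add: sum_subtractf, rule sum.swap)
    finally show ?thesis by (simp add: mi_def)
  qed
  define n where "n = (\<lambda>x::nat\<times>nat. if x \<in> Q2 q then nat (mi (fst x) (snd x)) else 0)"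
  have nmi: "int (n (r,s)) = mi r s" if "r \<in> {1..q}" "s \<in> {1..q}" for r s
    using mi_nn[OF that] that by (simp add: n_def)
  have "n \<in> types NN q"
  proof -
    have "(\<Sum>s\<in>{1..q}. n (r,s)) = NN" if "r \<in> {1..q}" for r
    proof -
      have "int (\<Sum>s\<in>{1..q}. n (r,s)) = (\<Sum>s\<in>{1..q}. mi r s)"
        unfolding of_nat_sum using nmi that by (intro sum.cong) auto
      hence "int (\<Sum>s\<in>{1..q}. n (r,s)) = int NN" using row[OF that] by (rule trans)
      thus ?thesis by (simp only: of_nat_eq_iff)
    qed
    moreover have "(\<Sum>r\<in>{1..q}. n (r,s)) = NN" if "s \<in> {1..q}" for s
    proof -
      have "int (\<Sum>r\<in>{1..q}. n (r,s)) = (\<Sum>r\<in>{1..q}. mi r s)"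
        unfolding of_nat_sum using nmi that by (intro sum.cong) auto
      hence "int (\<Sum>r\<in>{1..q}. n (r,s)) = int NN" using col[OF that] by (rule trans)
      thus ?thesis by (simp only: of_nat_eq_iff)
    qed
    moreover have "\<forall>x. x \<notin> Q2 q \<longrightarrow> n x = 0" by (simp add: n_def)
    ultimately show ?thesis unfolding types_def by blast
  qed
  moreover have "\<bar>real (n x) - real (NN * q) * \<nu> x\<bar> \<le> real q ^ 2" if hx: "x \<in> Q2 q" for x
  proof -
    obtain r s where x: "x = (r,s)" "r \<in> {1..q}" "s \<in> {1..q}" using hx by auto
    have "real (n x) = of_int (mi r s)" using nmi[OF x(2,3)] x(1) by (metis of_int_of_nat_eq)
    thus ?thesis using dev[OF x(2,3)] x(1) by (simp add: F_def RN_def)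
  qed
  ultimately show ?thesis by blast
qed

lemma types_le: "n \<in> types NN q \<Longrightarrow> n x \<le> NN * q"
proof (cases "x \<in> Q2 q")
  case True
  assume n: "n \<in> types NN q"
  have "n x \<le> sum n (Q2 q)" using True by (intro member_le_sum) auto
  thus ?thesis using types_sum[OF n] by simp
next
  case False
  assume n: "n \<in> types NN q"
  hence "n x = 0" using False unfolding types_def by blast
  thus ?thesis by simp
qed

lemma types_Mstar:
  assumes n: "n \<in> types NN q" and pos: "NN > 0" "q > 0"
  shows "(\<lambda>x. real (n x) / real (NN * q)) \<in> Mstar q"
proof -
  have z: "n x = 0" if "x \<notin> Q2 q" for x using n that unfolding types_def by blast
  have row: "(\<Sum>s\<in>{1..q}. n (r,s)) = NN" if "r \<in> {1..q}" for r using n that unfolding types_def by blast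
  have col: "(\<Sum>r\<in>{1..q}. n (r,s)) = NN" if "s \<in> {1..q}" for s using n that unfolding types_def by blast
  have "(\<Sum>s\<in>{1..q}. real (n (r,s)) / real (NN*q)) = 1 / real q" if "r \<in> {1..q}" for r
  proof -
    have h: "(\<Sum>s\<in>{1..q}. real (n (r,s))) = real NN" using row[OF that] by (simp flip: of_nat_sum)
    have "(\<Sum>s\<in>{1..q}. real (n (r,s)) / real (NN*q)) = (\<Sum>s\<in>{1..q}. real (n (r,s))) / real (NN*q)"
      by (rule sum_divide_distrib[symmetric])
    also have "\<dots> = real NN / real (NN*q)" by (simp only: h)
    finally show ?thesis using pos by simp
  qed
  moreover have "(\<Sum>r\<in>{1..q}. real (n (r,s)) / real (NN*q)) = 1 / real q" if "s \<in> {1..q}" for s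
  proof -
    have h: "(\<Sum>r\<in>{1..q}. real (n (r,s))) = real NN" using col[OF that] by (simp flip: of_nat_sum)
    have "(\<Sum>r\<in>{1..q}. real (n (r,s)) / real (NN*q)) = (\<Sum>r\<in>{1..q}. real (n (r,s))) / real (NN*q)"
      by (rule sum_divide_distrib[symmetric])
    also have "\<dots> = real NN / real (NN*q)" by (simp only: h)
    finally show ?thesis using pos by simp
  qed
  ultimately show ?thesis unfolding Mstar_def using z by auto
qed

definition prk :: "nat \<Rightarrow> (nat \<Rightarrow> nat) \<times> (nat \<Rightarrow> nat) \<Rightarrow> nat \<times> nat \<Rightarrow> real" where
  "prk N k = (\<lambda>x. real (ov N (fst k) (snd k) x) / real N)"

lemma E2_expr:
  assumes "NN > 0" "q > 0" "c > 0"
  shows "cond_exp_J (NN*q) c K (\<lambda>J. (Ztilde NN q \<beta> J)^2) =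
     (\<Sum>k\<in>balanced_configs NN q \<times> balanced_configs NN q. Gq \<beta> q (prk (NN*q) k) ^ K)"
proof -
  have p: "NN * q > 0" using assms by simp
  show ?thesis unfolding E2_eq[OF p assms(3)]
  proof (intro sum.cong refl)
    fix k assume k: "k \<in> balanced_configs NN q \<times> balanced_configs NN q"
    then obtain a b where ab: "k = (a,b)" "a \<in> balanced_configs NN q" "b \<in> balanced_configs NN q" by auto
    show "(sum (\<lambda>x. gs \<beta> (fst k) x * gs \<beta> (snd k) x) (box (NN*q)) / real (NN*q) ^ 2) ^ K = Gq \<beta> q (prk (NN*q) k) ^ K"
      unfolding ab(1) fst_conv snd_conv prk_def E2_term[OF ab(2,3) p] ..
  qed
qed

lemma E1_expr:
  assumes "NN > 0" "q > 0" "c > 0"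
  shows "cond_exp_J (NN*q) c K (Ztilde NN q \<beta>) =
     real (card (balanced_configs NN q)) * (1 - (1 - exp (- \<beta>)) / real q) ^ K"
proof -
  have p: "NN * q > 0" using assms by simp
  have "(\<Sum>\<sigma>\<in>balanced_configs NN q. (sum (gs \<beta> \<sigma>) (box (NN*q)) / real (NN*q) ^ 2) ^ K)
      = (\<Sum>\<sigma>\<in>balanced_configs NN q. (1 - (1 - exp (- \<beta>)) / real q) ^ K)"
    by (intro sum.cong refl) (simp only: E1_term[OF _ p])
  thus ?thesis unfolding E1_eq[OF p assms(3)] by simp
qed

lemma card_bal_pos: "real (card (balanced_configs NN q)) > 0"
  unfolding card_bal by simp

lemma card_img:
  fixes NN q :: nat
  defines "Img \<equiv> (\<lambda>k. ov (NN*q) (fst k) (snd k)) ` (balanced_configs NN q \<times> balanced_configs NN q)"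
  shows "real (card Img) \<le> (real (NN*q) + 1) ^ (q*q)" "Img \<subseteq> types NN q" "finite Img"
proof -
  show sub: "Img \<subseteq> types NN q" unfolding Img_def using ov_types by auto
  have sub2: "Img \<subseteq> (\<lambda>f x. if x \<in> Q2 q then f x else 0) ` (PiE (Q2 q) (\<lambda>_. {0..NN*q}))"
  proof
    fix n assume "n \<in> Img"
    hence n: "n \<in> types NN q" using sub by auto
    show "n \<in> (\<lambda>f x. if x \<in> Q2 q then f x else 0) ` (PiE (Q2 q) (\<lambda>_. {0..NN*q}))"
    proof (rule image_eqI[where x="restrict n (Q2 q)"])
      show "n = (\<lambda>x. if x \<in> Q2 q then restrict n (Q2 q) x else 0)"
        using n unfolding types_def by auto
      show "restrict n (Q2 q) \<in> PiE (Q2 q) (\<lambda>_. {0..NN*q})" using types_le[OF n] by auto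
    qed
  qed
  have finB: "finite ((\<lambda>f x. if x \<in> Q2 q then f x else 0) ` (PiE (Q2 q) (\<lambda>_. {0..NN*q})))"
    by (intro finite_imageI finite_PiE) auto
  have fi: "finite Img" using finite_subset[OF sub2 finB] .
  have "card Img \<le> card ((\<lambda>f x. if x \<in> Q2 q then f x else 0) ` (PiE (Q2 q) (\<lambda>_. {0..NN*q})))"
    using card_mono[OF finB sub2] .
  also have "\<dots> \<le> card (PiE (Q2 q) (\<lambda>_. {0..NN*q}))" by (rule card_image_le) (auto intro: finite_PiE)
  also have "\<dots> = (NN*q + 1) ^ (q*q)" by (simp add: card_PiE)
  finally show "real (card Img) \<le> (real (NN*q) + 1) ^ (q*q)"
    by (metis of_nat_1 of_nat_add of_nat_le_iff of_nat_power)
  show "finite Img" by (rule fi)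
qed

lemma ln_card_pairs:
  assumes n: "n \<in> types NN q" and pos: "NN > 0" "q > 0"
  defines "A \<equiv> {k\<in>balanced_configs NN q \<times> balanced_configs NN q. ov (NN*q) (fst k) (snd k) = n}"
  shows "real (card A) > 0"
    "ln (real (card A)) \<le> real (NN*q) * entropy2 q (\<lambda>x. real (n x) / real (NN*q)) + 1 + ln (real (NN*q) + 1)"
    "ln (real (card A)) \<ge> real (NN*q) * entropy2 q (\<lambda>x. real (n x) / real (NN*q)) - real (q*q) * (1 + ln (real (NN*q) + 1))"
proof -
  have c: "real (card A) = fact (NN*q) / (\<Prod>x\<in>Q2 q. fact (n x))" unfolding A_def by (rule card_pairs[OF n])
  show "real (card A) > 0" unfolding c by (intro divide_pos_pos prod_pos) auto
  have s: "sum n (Q2 q) = NN * q" by (rule types_sum[OF n])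
  have e: "real (NN*q) * entropy2 q (\<lambda>x. real (n x) / real (NN*q)) = LL (NN*q) - (\<Sum>x\<in>Q2 q. LL (n x))"
    by (rule entropy_types[OF s]) (use pos in simp)
  show "ln (real (card A)) \<le> real (NN*q) * entropy2 q (\<lambda>x. real (n x) / real (NN*q)) + 1 + ln (real (NN*q) + 1)"
    unfolding c e using count_bounds(2)[OF _ s] by simp
  show "ln (real (card A)) \<ge> real (NN*q) * entropy2 q (\<lambda>x. real (n x) / real (NN*q)) - real (q*q) * (1 + ln (real (NN*q) + 1))"
    unfolding c e using count_bounds(1)[OF _ s] by simp
qed

lemma KlnG:
  assumes "\<bar>l\<bar> \<le> B" and "RN > 0"
  shows "real K * l \<le> RN * (\<kappa> / 2) * l + RN * B * \<bar>real K / RN - \<kappa> / 2\<bar>"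
    "real K * l \<ge> RN * (\<kappa> / 2) * l - RN * B * \<bar>real K / RN - \<kappa> / 2\<bar>"
proof -
  have e: "real K * l = RN * (\<kappa> / 2) * l + RN * (real K / RN - \<kappa> / 2) * l"
    using assms(2) by (simp add: field_simps)
  have "\<bar>RN * (real K / RN - \<kappa> / 2) * l\<bar> \<le> RN * \<bar>real K / RN - \<kappa> / 2\<bar> * B"
    using assms by (simp add: abs_mult mult_left_mono mult_mono)
  hence h: "\<bar>RN * (real K / RN - \<kappa> / 2) * l\<bar> \<le> RN * B * \<bar>real K / RN - \<kappa> / 2\<bar>" by (simp add: mult_ac)
  note h1 = abs_le_D1[OF h] and h2 = abs_le_D2[OF h]
  thus "real K * l \<le> RN * (\<kappa> / 2) * l + RN * B * \<bar>real K / RN - \<kappa> / 2\<bar>"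
    "real K * l \<ge> RN * (\<kappa> / 2) * l - RN * B * \<bar>real K / RN - \<kappa> / 2\<bar>"
    unfolding e using h1 h2 by linarith+
qed

lemma term_bounds:
  assumes q: "q \<ge> 2" and b: "\<beta> \<ge> 0" and NN: "NN > 0" and n: "n \<in> types NN q"
  defines "RN \<equiv> real (NN * q)"
  defines "A \<equiv> {k\<in>balanced_configs NN q \<times> balanced_configs NN q. ov (NN*q) (fst k) (snd k) = n}"
  defines "p \<equiv> (\<lambda>x. real (n x) / real (NN * q))"
  shows "real (card A) * Gq \<beta> q p ^ K > 0"
    "ln (real (card A) * Gq \<beta> q p ^ K) \<le> RN * phi2 \<beta> \<kappa> q p + RN * (\<beta> + 1) * \<bar>real K / RN - \<kappa> / 2\<bar> + 1 + ln (RN + 1)"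
    "ln (real (card A) * Gq \<beta> q p ^ K) \<ge> RN * phi2 \<beta> \<kappa> q p - RN * (\<beta> + 1) * \<bar>real K / RN - \<kappa> / 2\<bar> - real (q*q) * (1 + ln (RN + 1))"
proof -
  have q0: "q > 0" using q by simp
  have RN: "RN > 0" using NN q0 by (simp add: RN_def)
  have pM: "p \<in> Mstar q" unfolding p_def by (rule types_Mstar[OF n NN q0])
  have G: "Gq \<beta> q p > 0" "\<bar>ln (Gq \<beta> q p)\<bar> \<le> \<beta> + 1" using lnG_bound[OF pM q b] by auto
  have cA: "real (card A) > 0" unfolding A_def by (rule ln_card_pairs(1)[OF n NN q0])
  show "real (card A) * Gq \<beta> q p ^ K > 0" using cA G by simp
  have ln_eq: "ln (real (card A) * Gq \<beta> q p ^ K) = ln (real (card A)) + real K * ln (Gq \<beta> q p)"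
    using cA G by (simp add: ln_mult_pos ln_realpow)
  have ph: "RN * phi2 \<beta> \<kappa> q p = RN * entropy2 q p + RN * (\<kappa> / 2) * ln (Gq \<beta> q p)"
    unfolding phi2_Gq by (simp add: algebra_simps)
  show "ln (real (card A) * Gq \<beta> q p ^ K) \<le> RN * phi2 \<beta> \<kappa> q p + RN * (\<beta> + 1) * \<bar>real K / RN - \<kappa> / 2\<bar> + 1 + ln (RN + 1)"
    using ln_card_pairs(2)[OF n NN q0, folded A_def, folded p_def, folded RN_def] KlnG(1)[OF G(2) RN, where K=K and \<kappa>=\<kappa>]
    unfolding ln_eq ph by linarith
  show "ln (real (card A) * Gq \<beta> q p ^ K) \<ge> RN * phi2 \<beta> \<kappa> q p - RN * (\<beta> + 1) * \<bar>real K / RN - \<kappa> / 2\<bar> - real (q*q) * (1 + ln (RN + 1))"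
    using ln_card_pairs(3)[OF n NN q0, folded A_def, folded p_def, folded RN_def] KlnG(2)[OF G(2) RN, where K=K and \<kappa>=\<kappa>]
    unfolding ln_eq ph by linarith
qed

lemma E2_lower:
  assumes q: "q \<ge> 2" and b: "\<beta> \<ge> 0" and NN: "NN > 0" and n: "n \<in> types NN q" and c: "c > 0"
  defines "RN \<equiv> real (NN * q)"
  shows "ln (cond_exp_J (NN*q) c K (\<lambda>J. (Ztilde NN q \<beta> J)^2)) \<ge>
      RN * phi2 \<beta> \<kappa> q (\<lambda>x. real (n x) / real (NN * q)) - RN * (\<beta> + 1) * \<bar>real K / RN - \<kappa> / 2\<bar>
      - real (q*q) * (1 + ln (RN + 1))"
proof -
  have q0: "q > 0" using q by simp
  define P where "P = balanced_configs NN q \<times> balanced_configs NN q"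
  define A where "A = {k\<in>P. ov (NN*q) (fst k) (snd k) = n}"
  define p where "p = (\<lambda>x. real (n x) / real (NN * q))"
  have tb: "real (card A) * Gq \<beta> q p ^ K > 0"
    "ln (real (card A) * Gq \<beta> q p ^ K) \<ge> RN * phi2 \<beta> \<kappa> q p - RN * (\<beta> + 1) * \<bar>real K / RN - \<kappa> / 2\<bar> - real (q*q) * (1 + ln (RN + 1))"
    using term_bounds(1)[OF q b NN n, where K=K] term_bounds(3)[OF q b NN n, where K=K and \<kappa>=\<kappa>] unfolding A_def P_def p_def RN_def by auto
  have finP: "finite P" unfolding P_def using finite_bal by simp
  have pk: "prk (NN*q) k = p" if "k \<in> A" for k using that by (auto simp: A_def prk_def p_def)
  have "real (card A) * Gq \<beta> q p ^ K = (\<Sum>k\<in>A. Gq \<beta> q (prk (NN*q) k) ^ K)"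
    using pk by simp
  also have "\<dots> \<le> (\<Sum>k\<in>P. Gq \<beta> q (prk (NN*q) k) ^ K)"
  proof (rule sum_mono2[OF finP])
    show "A \<subseteq> P" by (auto simp: A_def)
    fix k assume "k \<in> P - A"
    hence "k \<in> P" by simp
    then obtain a b where ab: "k = (a,b)" "a \<in> balanced_configs NN q" "b \<in> balanced_configs NN q"
      by (auto simp: P_def)
    have "prk (NN*q) k \<in> Mstar q" unfolding ab prk_def fst_conv snd_conv
      using types_Mstar[OF ov_types[OF ab(2,3)] NN q0] .
    hence "0 < Gq \<beta> q (prk (NN*q) k)" using lnG_bound(2)[OF _ q b] by blast
    thus "0 \<le> Gq \<beta> q (prk (NN*q) k) ^ K" by simp
  qed
  also have "\<dots> = cond_exp_J (NN*q) c K (\<lambda>J. (Ztilde NN q \<beta> J)^2)"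
    unfolding P_def by (rule E2_expr[OF NN q0 c, symmetric])
  finally have "ln (real (card A) * Gq \<beta> q p ^ K) \<le> ln (cond_exp_J (NN*q) c K (\<lambda>J. (Ztilde NN q \<beta> J)^2))"
    using tb(1) by simp
  thus ?thesis using tb(2) unfolding p_def by linarith
qed

lemma E2_upper:
  assumes q: "q \<ge> 2" and b: "\<beta> \<ge> 0" and NN: "NN > 0" and c: "c > 0"
    and mu: "\<mu> \<in> Mstar q" and mx: "\<forall>\<nu>\<in>Mstar q. phi2 \<beta> \<kappa> q \<nu> \<le> phi2 \<beta> \<kappa> q \<mu>"
  defines "RN \<equiv> real (NN * q)"
  shows "ln (cond_exp_J (NN*q) c K (\<lambda>J. (Ztilde NN q \<beta> J)^2)) \<le>
      RN * phi2 \<beta> \<kappa> q \<mu> + RN * (\<beta> + 1) * \<bar>real K / RN - \<kappa> / 2\<bar> + 1 + ln (RN + 1)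
      + real (q*q) * ln (RN + 1)"
proof -
  have q0: "q > 0" using q by simp
  have RN: "RN > 0" using NN q0 by (simp add: RN_def)
  define P where "P = balanced_configs NN q \<times> balanced_configs NN q"
  define g where "g = (\<lambda>k. ov (NN*q) (fst k) (snd k))"
  define Img where "Img = g ` P"
  define X where "X = RN * phi2 \<beta> \<kappa> q \<mu> + RN * (\<beta> + 1) * \<bar>real K / RN - \<kappa> / 2\<bar> + 1 + ln (RN + 1)"
  have finP: "finite P" unfolding P_def using finite_bal by simp
  have ci: "real (card Img) \<le> (RN + 1) ^ (q*q)" "Img \<subseteq> types NN q" "finite Img"
    using card_img[of NN q] unfolding Img_def g_def P_def RN_def by auto
  have E: "cond_exp_J (NN*q) c K (\<lambda>J. (Ztilde NN q \<beta> J)^2) = (\<Sum>k\<in>P. Gq \<beta> q (prk (NN*q) k) ^ K)"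
    unfolding P_def by (rule E2_expr[OF NN q0 c])
  also have "\<dots> = (\<Sum>n\<in>Img. \<Sum>k\<in>{k\<in>P. g k = n}. Gq \<beta> q (prk (NN*q) k) ^ K)"
    unfolding Img_def by (rule sum.image_gen[OF finP])
  also have "\<dots> = (\<Sum>n\<in>Img. real (card {k\<in>P. g k = n}) * Gq \<beta> q (\<lambda>x. real (n x) / real (NN * q)) ^ K)"
  proof (intro sum.cong refl)
    fix n assume "n \<in> Img"
    have "(\<Sum>k\<in>{k\<in>P. g k = n}. Gq \<beta> q (prk (NN*q) k) ^ K)
        = (\<Sum>k\<in>{k\<in>P. g k = n}. Gq \<beta> q (\<lambda>x. real (n x) / real (NN * q)) ^ K)"
      by (intro sum.cong refl) (auto simp: prk_def g_def)
    thus "(\<Sum>k\<in>{k\<in>P. g k = n}. Gq \<beta> q (prk (NN*q) k) ^ K) =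
       real (card {k\<in>P. g k = n}) * Gq \<beta> q (\<lambda>x. real (n x) / real (NN * q)) ^ K" by simp
  qed
  also have "\<dots> \<le> (\<Sum>n\<in>Img. exp X)"
  proof (intro sum_mono)
    fix n assume "n \<in> Img"
    hence n: "n \<in> types NN q" using ci(2) by auto
    define p where "p = (\<lambda>x. real (n x) / real (NN * q))"
    have tb: "real (card {k\<in>P. g k = n}) * Gq \<beta> q p ^ K > 0"
      "ln (real (card {k\<in>P. g k = n}) * Gq \<beta> q p ^ K) \<le> RN * phi2 \<beta> \<kappa> q p + RN * (\<beta> + 1) * \<bar>real K / RN - \<kappa> / 2\<bar> + 1 + ln (RN + 1)"
      using term_bounds(1)[OF q b NN n, where K=K] term_bounds(2)[OF q b NN n, where K=K and \<kappa>=\<kappa>] unfolding P_def g_def p_def RN_def by auto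
    have "phi2 \<beta> \<kappa> q p \<le> phi2 \<beta> \<kappa> q \<mu>" using mx types_Mstar[OF n NN q0] by (simp add: p_def)
    hence "RN * phi2 \<beta> \<kappa> q p \<le> RN * phi2 \<beta> \<kappa> q \<mu>" using RN by simp
    hence "ln (real (card {k\<in>P. g k = n}) * Gq \<beta> q p ^ K) \<le> X" using tb(2) unfolding X_def by linarith
    hence "exp (ln (real (card {k\<in>P. g k = n}) * Gq \<beta> q p ^ K)) \<le> exp X" by (simp only: exp_le_cancel_iff)
    hence "real (card {k\<in>P. g k = n}) * Gq \<beta> q p ^ K \<le> exp X" using exp_ln[OF tb(1)] by simp
    thus "real (card {k\<in>P. g k = n}) * Gq \<beta> q (\<lambda>x. real (n x) / real (NN * q)) ^ K \<le> exp X" by (simp add: p_def)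
  qed
  also have "\<dots> = real (card Img) * exp X" by simp
  also have "\<dots> \<le> (RN + 1) ^ (q*q) * exp X" using ci(1) by (simp add: mult_right_mono)
  finally have up: "cond_exp_J (NN*q) c K (\<lambda>J. (Ztilde NN q \<beta> J)^2) \<le> (RN + 1) ^ (q*q) * exp X" .
  have pos: "cond_exp_J (NN*q) c K (\<lambda>J. (Ztilde NN q \<beta> J)^2) > 0"
  proof -
    have "balanced_configs NN q \<noteq> {}" using card_bal_pos[of NN q] by auto
    hence "P \<noteq> {}" by (simp add: P_def)
    moreover have "\<forall>k\<in>P. 0 < Gq \<beta> q (prk (NN*q) k) ^ K"
    proof
      fix k assume "k \<in> P"
      then obtain a b where ab: "k = (a,b)" "a \<in> balanced_configs NN q" "b \<in> balanced_configs NN q"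
        by (auto simp: P_def)
      have "prk (NN*q) k \<in> Mstar q" unfolding ab prk_def fst_conv snd_conv
        using types_Mstar[OF ov_types[OF ab(2,3)] NN q0] .
      hence "0 < Gq \<beta> q (prk (NN*q) k)" using lnG_bound(2)[OF _ q b] by blast
      thus "0 < Gq \<beta> q (prk (NN*q) k) ^ K" by simp
    qed
    ultimately show ?thesis unfolding E by (intro sum_pos finP) auto
  qed
  have "ln (cond_exp_J (NN*q) c K (\<lambda>J. (Ztilde NN q \<beta> J)^2)) \<le> ln ((RN + 1) ^ (q*q) * exp X)"
    using up pos by (subst ln_le_cancel_iff) (auto intro: order.strict_trans2[OF pos up])
  also have "\<dots> = real (q*q) * ln (RN + 1) + X"
    using RN by (simp add: ln_mult_pos ln_realpow)
  finally show ?thesis unfolding X_def by simp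
qed

lemma seq_facts:
  assumes NN: "filterlim NN at_top sequentially" and q: "q \<ge> (1::nat)"
  shows "filterlim (\<lambda>n. real (NN n * q)) at_top sequentially"
    and "(\<lambda>n. ln (real (NN n * q) + 1) / real (NN n * q)) \<longlonglongrightarrow> 0"
    and "(\<lambda>n. 1 / real (NN n * q)) \<longlonglongrightarrow> 0"
    and "eventually (\<lambda>n. NN n > 0) sequentially"
proof -
  have f1: "filterlim (\<lambda>n. real (NN n)) at_top sequentially"
    by (rule filterlim_compose[OF filterlim_real_sequentially NN])
  show F: "filterlim (\<lambda>n. real (NN n * q)) at_top sequentially"
  proof (rule filterlim_at_top_mono[OF f1])
    show "eventually (\<lambda>n. real (NN n) \<le> real (NN n * q)) sequentially"
    proof (intro always_eventually allI)
      fix n have "NN n \<le> NN n * q" using q by simp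
      thus "real (NN n) \<le> real (NN n * q)" by (rule of_nat_mono)
    qed
  qed
  have g: "((\<lambda>x::real. ln (x + 1) / x) \<longlongrightarrow> 0) at_top" by real_asymp
  show "(\<lambda>n. ln (real (NN n * q) + 1) / real (NN n * q)) \<longlonglongrightarrow> 0"
    by (rule filterlim_compose[OF g F])
  show "(\<lambda>n. 1 / real (NN n * q)) \<longlonglongrightarrow> 0"
    using tendsto_inverse_0_at_top[OF F] by (simp add: divide_inverse)
  have "eventually (\<lambda>n. 1 \<le> NN n) sequentially"
    using NN unfolding filterlim_at_top by blast
  thus "eventually (\<lambda>n. NN n > 0) sequentially" by (rule eventually_mono) simp
qed

lemma part1:
  fixes q :: nat and \<beta> c \<kappa> :: real
  assumes q: "q \<ge> 2" and b: "\<beta> \<ge> 0" and c: "c > 0"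
    and NN: "filterlim NN at_top sequentially"
    and K: "(\<lambda>n. real (K n) / real (NN n * q)) \<longlonglongrightarrow> \<kappa> / 2"
  shows "(\<lambda>n. ln (cond_exp_J (NN n * q) c (K n) (Ztilde (NN n) q \<beta>)) / real (NN n * q)) \<longlonglongrightarrow> Pfun \<beta> \<kappa> q"
proof -
  have q0: "q > 0" and q1: "q \<ge> 1" using q by auto
  note sf = seq_facts[OF NN q1]
  define RN where "RN = (\<lambda>n. real (NN n * q))"
  define o1 where "o1 = (\<lambda>n. ln (RN n + 1) / RN n)"
  define o2 where "o2 = (\<lambda>n. 1 / RN n)"
  have o1: "o1 \<longlonglongrightarrow> 0" and o2: "o2 \<longlonglongrightarrow> 0" using sf(2,3) by (simp_all add: o1_def o2_def RN_def)
  define x0 where "x0 = 1 - (1 - exp (- \<beta>)) / real q"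
  have x0: "x0 > 0"
  proof -
    have "1 - exp (- \<beta>) < 1" by simp
    moreover have "1 \<le> real q" using q by simp
    ultimately have h: "1 - exp (- \<beta>) < 1 * real q" by linarith
    have "(1 - exp (- \<beta>)) / real q < 1" using q0 h by (subst pos_divide_less_eq) auto
    thus ?thesis by (simp add: x0_def)
  qed
  define cb where "cb = (\<lambda>n. real (card (balanced_configs (NN n) q)))"
  have ev_eq: "eventually (\<lambda>n. ln (cond_exp_J (NN n * q) c (K n) (Ztilde (NN n) q \<beta>)) / real (NN n * q)
      = ln (cb n) / RN n + real (K n) / RN n * ln x0) sequentially"
    using sf(4)
  proof (rule eventually_mono)
    fix n assume n: "NN n > 0"
    have "cond_exp_J (NN n * q) c (K n) (Ztilde (NN n) q \<beta>) = cb n * x0 ^ K n"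
      unfolding E1_expr[OF n q0 c] cb_def x0_def ..
    moreover have "ln (cb n * x0 ^ K n) = ln (cb n) + real (K n) * ln x0"
      using card_bal_pos x0 by (simp add: cb_def ln_mult_pos ln_realpow)
    ultimately show "ln (cond_exp_J (NN n * q) c (K n) (Ztilde (NN n) q \<beta>)) / real (NN n * q)
      = ln (cb n) / RN n + real (K n) / RN n * ln x0" by (simp add: RN_def add_divide_distrib)
  qed
  have lcb: "(\<lambda>n. ln (cb n) / RN n) \<longlonglongrightarrow> ln (real q)"
  proof (rule tendsto_sandwich)
    show "eventually (\<lambda>n. ln (real q) - real q * (o2 n + o1 n) \<le> ln (cb n) / RN n) sequentially"
      using sf(4)
    proof (rule eventually_mono)
      fix n assume n: "NN n > 0"
      have R: "RN n > 0" using n q0 by (simp add: RN_def)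
      have "ln (cb n) \<ge> RN n * ln (real q) - real q * (1 + ln (RN n + 1))"
        using ln_card_bal(1)[OF n q0] by (simp add: cb_def RN_def)
      hence "ln (cb n) / RN n \<ge> (RN n * ln (real q) - real q * (1 + ln (RN n + 1))) / RN n"
        using R by (simp add: divide_right_mono)
      also have "(RN n * ln (real q) - real q * (1 + ln (RN n + 1))) / RN n = ln (real q) - real q * (o2 n + o1 n)"
        using R by (simp add: o1_def o2_def field_simps)
      finally show "ln (real q) - real q * (o2 n + o1 n) \<le> ln (cb n) / RN n" .
    qed
    show "eventually (\<lambda>n. ln (cb n) / RN n \<le> ln (real q) + (o2 n + o1 n)) sequentially"
      using sf(4)
    proof (rule eventually_mono)
      fix n assume n: "NN n > 0"
      have R: "RN n > 0" using n q0 by (simp add: RN_def)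
      have "ln (cb n) \<le> RN n * ln (real q) + 1 + ln (RN n + 1)"
        using ln_card_bal(2)[OF n q0] by (simp add: cb_def RN_def)
      hence "ln (cb n) / RN n \<le> (RN n * ln (real q) + 1 + ln (RN n + 1)) / RN n"
        using R by (simp add: divide_right_mono)
      also have "(RN n * ln (real q) + 1 + ln (RN n + 1)) / RN n = ln (real q) + (o2 n + o1 n)"
        using R by (simp add: o1_def o2_def field_simps)
      finally show "ln (cb n) / RN n \<le> ln (real q) + (o2 n + o1 n)" .
    qed
    show "(\<lambda>n. ln (real q) - real q * (o2 n + o1 n)) \<longlonglongrightarrow> ln (real q)"
      using tendsto_diff[OF tendsto_const tendsto_mult[OF tendsto_const tendsto_add[OF o2 o1]]] by simp
    show "(\<lambda>n. ln (real q) + (o2 n + o1 n)) \<longlonglongrightarrow> ln (real q)"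
      using tendsto_add[OF tendsto_const tendsto_add[OF o2 o1]] by simp
  qed
  have "(\<lambda>n. ln (cb n) / RN n + real (K n) / RN n * ln x0) \<longlonglongrightarrow> ln (real q) + \<kappa> / 2 * ln x0"
    by (intro tendsto_add lcb tendsto_mult_right) (use K in \<open>simp add: RN_def\<close>)
  hence "(\<lambda>n. ln (cond_exp_J (NN n * q) c (K n) (Ztilde (NN n) q \<beta>)) / real (NN n * q)) \<longlonglongrightarrow> ln (real q) + \<kappa> / 2 * ln x0"
    using tendsto_cong[OF ev_eq] by simp
  thus ?thesis by (simp add: Pfun_def x0_def)
qed

lemma mix_Mstar:
  assumes mu: "\<mu> \<in> Mstar q" and q: "q > 0" and t: "0 \<le> t" "t \<le> 1"
  shows "(\<lambda>x. (1 - t) * \<mu> x + t * Ufun q x) \<in> Mstar q"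
proof -
  have U: "Ufun q \<in> Mstar q" by (rule U_Mstar[OF q])
  have nn: "0 \<le> (1 - t) * \<mu> x + t * Ufun q x" for x
    using Mstar_nonneg[OF mu, of x] Mstar_nonneg[OF U, of x] t by simp
  have z: "(1 - t) * \<mu> x + t * Ufun q x = 0" if "x \<notin> Q2 q" for x
    using Mstar_zero[OF mu that] Mstar_zero[OF U that] by simp
  have r: "(\<Sum>r2\<in>{1..q}. (1 - t) * \<mu> (r, r2) + t * Ufun q (r, r2)) = 1 / real q" if "r \<in> {1..q}" for r
  proof -
    have a: "(\<Sum>r2\<in>{1..q}. \<mu> (r, r2)) = 1 / real q" using mu that unfolding Mstar_def by blast
    have b: "(\<Sum>r2\<in>{1..q}. Ufun q (r, r2)) = 1 / real q" using U that unfolding Mstar_def by blast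
    have "(\<Sum>r2\<in>{1..q}. (1 - t) * \<mu> (r, r2) + t * Ufun q (r, r2)) = (1 - t) * (\<Sum>r2\<in>{1..q}. \<mu> (r, r2)) + t * (\<Sum>r2\<in>{1..q}. Ufun q (r, r2))"
      by (simp add: sum.distrib sum_distrib_left)
    also have "\<dots> = (1 - t) / real q + t / real q" unfolding a b by simp
    also have "\<dots> = 1 / real q" using q by (simp add: field_simps)
    finally show ?thesis .
  qed
  have c: "(\<Sum>r1\<in>{1..q}. (1 - t) * \<mu> (r1, r) + t * Ufun q (r1, r)) = 1 / real q" if "r \<in> {1..q}" for r
  proof -
    have a: "(\<Sum>r1\<in>{1..q}. \<mu> (r1, r)) = 1 / real q" using mu that unfolding Mstar_def by blast
    have b: "(\<Sum>r1\<in>{1..q}. Ufun q (r1, r)) = 1 / real q" using U that unfolding Mstar_def by blast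
    have "(\<Sum>r1\<in>{1..q}. (1 - t) * \<mu> (r1, r) + t * Ufun q (r1, r)) = (1 - t) * (\<Sum>r1\<in>{1..q}. \<mu> (r1, r)) + t * (\<Sum>r1\<in>{1..q}. Ufun q (r1, r))"
      by (simp add: sum.distrib sum_distrib_left)
    also have "\<dots> = (1 - t) / real q + t / real q" unfolding a b by simp
    also have "\<dots> = 1 / real q" using q by (simp add: field_simps)
    finally show ?thesis .
  qed
  show ?thesis unfolding Mstar_def using nn z r c by blast
qed

lemma mix_lower:
  assumes mu: "\<mu> \<in> Mstar q" and q: "q > 0" and t: "0 \<le> t" "t \<le> 1" and x: "x \<in> Q2 q"
  shows "t / real q ^ 2 \<le> (1 - t) * \<mu> x + t * Ufun q x"
  using Mstar_nonneg[OF mu, of x] t x by (simp add: Ufun_def)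

lemma part2:
  fixes q :: nat and \<beta> c \<kappa> :: real
  assumes q: "q \<ge> 2" and b: "\<beta> \<ge> 0" and c: "c > 0"
    and mu: "\<mu> \<in> Mstar q" and mx: "\<forall>\<nu>\<in>Mstar q. phi2 \<beta> \<kappa> q \<nu> \<le> phi2 \<beta> \<kappa> q \<mu>"
    and NN: "filterlim NN at_top sequentially"
    and K: "(\<lambda>n. real (K n) / real (NN n * q)) \<longlonglongrightarrow> \<kappa> / 2"
  shows "(\<lambda>n. ln (cond_exp_J (NN n * q) c (K n) (\<lambda>J. (Ztilde (NN n) q \<beta> J)^2)) / real (NN n * q))
           \<longlonglongrightarrow> phi2 \<beta> \<kappa> q \<mu>"
proof -
  have q0: "q > 0" and q1: "q \<ge> 1" using q by auto
  note sf = seq_facts[OF NN q1]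
  define RN where "RN = (\<lambda>n. real (NN n * q))"
  define o1 where "o1 = (\<lambda>n. ln (RN n + 1) / RN n)"
  define o2 where "o2 = (\<lambda>n. 1 / RN n)"
  define D where "D = (\<lambda>n. \<bar>real (K n) / RN n - \<kappa> / 2\<bar>)"
  define E where "E = (\<lambda>n. cond_exp_J (NN n * q) c (K n) (\<lambda>J. (Ztilde (NN n) q \<beta> J)^2))"
  define B where "B = \<beta> + 1"
  have o1: "o1 \<longlonglongrightarrow> 0" and o2: "o2 \<longlonglongrightarrow> 0" using sf(2,3) by (simp_all add: o1_def o2_def RN_def)
  have D: "D \<longlonglongrightarrow> 0"
  proof -
    have K': "(\<lambda>n. real (K n) / RN n) \<longlonglongrightarrow> \<kappa> / 2" unfolding RN_def using K .
    have "(\<lambda>n. \<bar>real (K n) / RN n - \<kappa> / 2\<bar>) \<longlonglongrightarrow> \<bar>\<kappa> / 2 - \<kappa> / 2\<bar>"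
      by (rule tendsto_rabs[OF tendsto_diff[OF K' tendsto_const]])
    thus ?thesis by (simp add: D_def)
  qed
  have RNpos: "eventually (\<lambda>n. RN n > 0) sequentially"
    using sf(4) by (rule eventually_mono) (use q0 in \<open>simp add: RN_def\<close>)
  have Gmu: "Gq \<beta> q \<mu> > 0" using lnG_bound(2)[OF mu q b] .
  have "(\<lambda>n. ln (E n) / RN n) \<longlonglongrightarrow> phi2 \<beta> \<kappa> q \<mu>"
  proof (rule order_tendstoI)
    fix a assume a: "phi2 \<beta> \<kappa> q \<mu> < a"
    define U where "U = (\<lambda>n. phi2 \<beta> \<kappa> q \<mu> + B * D n + o2 n + o1 n + real (q*q) * o1 n)"
    have "U \<longlonglongrightarrow> phi2 \<beta> \<kappa> q \<mu> + B * 0 + 0 + 0 + real (q*q) * 0"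
      unfolding U_def by (intro tendsto_intros D o1 o2)
    hence "eventually (\<lambda>n. U n < a) sequentially" by (rule order_tendstoD(2)) (use a in simp)
    moreover have "eventually (\<lambda>n. ln (E n) / RN n \<le> U n) sequentially"
      using sf(4)
    proof (rule eventually_mono)
      fix n assume n: "NN n > 0"
      have R: "RN n > 0" using n q0 by (simp add: RN_def)
      have "ln (E n) \<le> RN n * phi2 \<beta> \<kappa> q \<mu> + RN n * B * D n + 1 + ln (RN n + 1) + real (q*q) * ln (RN n + 1)"
        using E2_upper[OF q b n c mu mx, where K="K n"] by (simp add: E_def RN_def D_def B_def)
      hence "ln (E n) / RN n \<le> (RN n * phi2 \<beta> \<kappa> q \<mu> + RN n * B * D n + 1 + ln (RN n + 1) + real (q*q) * ln (RN n + 1)) / RN n"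
        using R by (simp add: divide_right_mono)
      also have "\<dots> = U n" using R by (simp add: U_def o1_def o2_def field_simps)
      finally show "ln (E n) / RN n \<le> U n" .
    qed
    ultimately show "eventually (\<lambda>n. ln (E n) / RN n < a) sequentially"
      by eventually_elim simp
  next
    fix a assume a: "a < phi2 \<beta> \<kappa> q \<mu>"
    define \<epsilon> where "\<epsilon> = phi2 \<beta> \<kappa> q \<mu> - a"
    have \<epsilon>: "\<epsilon> > 0" using a by (simp add: \<epsilon>_def)
    define tk where "tk = (\<lambda>k::nat. 1 / real (Suc k))"
    have tk: "tk \<longlonglongrightarrow> 0" unfolding tk_def using LIMSEQ_Suc[OF lim_1_over_n] by simp
    have tk01: "0 < tk k" "tk k \<le> 1" for k by (simp_all add: tk_def)
    define nuk where "nuk = (\<lambda>k x. (1 - tk k) * \<mu> x + tk k * Ufun q x)"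
    have "(\<lambda>k. phi2 \<beta> \<kappa> q (nuk k)) \<longlonglongrightarrow> phi2 \<beta> \<kappa> q \<mu>"
    proof (rule phi2_tendsto)
      fix x
      have "(\<lambda>k. (1 - tk k) * \<mu> x + tk k * Ufun q x) \<longlonglongrightarrow> (1 - 0) * \<mu> x + 0 * Ufun q x"
        by (intro tendsto_intros tk)
      thus "(\<lambda>k. nuk k x) \<longlonglongrightarrow> \<mu> x" by (simp add: nuk_def)
    next
      fix k x show "0 \<le> nuk k x" unfolding nuk_def
        using Mstar_nonneg[OF mix_Mstar[OF mu q0 less_imp_le[OF tk01(1)[of k]] tk01(2)[of k]], of x] by simp
    next
      fix x show "0 \<le> \<mu> x" by (rule Mstar_nonneg[OF mu])
    qed (rule Gmu)
    hence "eventually (\<lambda>k. phi2 \<beta> \<kappa> q \<mu> - \<epsilon> / 2 < phi2 \<beta> \<kappa> q (nuk k)) sequentially"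
      by (rule order_tendstoD(1)) (use \<epsilon> in linarith)
    then obtain k where k: "phi2 \<beta> \<kappa> q \<mu> - \<epsilon> / 2 < phi2 \<beta> \<kappa> q (nuk k)"
      by (auto simp: eventually_sequentially)
    define \<nu> where "\<nu> = nuk k"
    define t where "t = tk k"
    have t: "0 \<le> t" "t \<le> 1" "t > 0" using tk01[of k] by (simp_all add: t_def)
    have nuM: "\<nu> \<in> Mstar q" unfolding \<nu>_def nuk_def t_def[symmetric] by (rule mix_Mstar[OF mu q0 t(1,2)])
    define \<delta> where "\<delta> = t / real q ^ 2"
    have \<delta>: "\<delta> > 0" using t q0 by (simp add: \<delta>_def)
    have nud: "\<delta> \<le> \<nu> x" if "x \<in> Q2 q" for x
      unfolding \<nu>_def nuk_def t_def[symmetric] \<delta>_def by (rule mix_lower[OF mu q0 t(1,2) that])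
    have Gnu: "Gq \<beta> q \<nu> > 0" using lnG_bound(2)[OF nuM q b] .
    define good where "good = (\<lambda>n. NN n > 0 \<and> real q ^ 2 \<le> real (NN n * q) * \<delta>)"
    have evgood: "eventually good sequentially"
    proof -
      have "eventually (\<lambda>n. real q ^ 2 / \<delta> \<le> real (NN n * q)) sequentially"
        using sf(1) unfolding filterlim_at_top by blast
      hence "eventually (\<lambda>n. real q ^ 2 \<le> real (NN n * q) * \<delta>) sequentially"
        by (rule eventually_mono) (use \<delta> in \<open>simp add: pos_divide_le_eq\<close>)
      thus ?thesis using sf(4) unfolding good_def by eventually_elim simp
    qed
    have "\<forall>n. \<exists>m. good n \<longrightarrow> m \<in> types (NN n) q \<and>
              (\<forall>x\<in>Q2 q. \<bar>real (m x) - real (NN n * q) * \<nu> x\<bar> \<le> real q ^ 2)"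
    proof
      fix n show "\<exists>m. good n \<longrightarrow> m \<in> types (NN n) q \<and>
              (\<forall>x\<in>Q2 q. \<bar>real (m x) - real (NN n * q) * \<nu> x\<bar> \<le> real q ^ 2)"
      proof (cases "good n")
        case True
        hence "real q ^ 2 \<le> real (NN n * q) * \<delta>" by (simp add: good_def)
        from rounding[OF nuM q0 nud this] show ?thesis by blast
      qed auto
    qed
    then obtain M where M: "\<And>n. good n \<Longrightarrow> M n \<in> types (NN n) q"
      "\<And>n x. good n \<Longrightarrow> x \<in> Q2 q \<Longrightarrow> \<bar>real (M n x) - real (NN n * q) * \<nu> x\<bar> \<le> real q ^ 2"
      by metis
    define p where "p = (\<lambda>n x. real (M n x) / real (NN n * q))"
    have plim: "(\<lambda>n. phi2 \<beta> \<kappa> q (p n)) \<longlonglongrightarrow> phi2 \<beta> \<kappa> q \<nu>"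
    proof (rule phi2_tendsto)
      fix x assume x: "x \<in> Q2 q"
      have "(\<lambda>n. p n x - \<nu> x) \<longlonglongrightarrow> 0"
      proof (rule Lim_null_comparison)
        show "eventually (\<lambda>n. norm (p n x - \<nu> x) \<le> real q ^ 2 * o2 n) sequentially"
          using evgood
        proof (rule eventually_mono)
          fix n assume g: "good n"
          have R: "RN n > 0" using g q0 by (simp add: good_def RN_def)
          have "(real (M n x) - RN n * \<nu> x) / RN n = real (M n x) / RN n - \<nu> x"
            using R by (simp add: diff_divide_distrib)
          hence "p n x - \<nu> x = (real (M n x) - RN n * \<nu> x) / RN n"
            by (simp add: p_def RN_def)
          hence "\<bar>p n x - \<nu> x\<bar> = \<bar>real (M n x) - RN n * \<nu> x\<bar> / RN n"
            using R by (simp add: abs_divide)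
          also have "\<dots> \<le> real q ^ 2 / RN n" using M(2)[OF g x] R by (simp add: RN_def divide_right_mono)
          finally show "norm (p n x - \<nu> x) \<le> real q ^ 2 * o2 n" by (simp add: o2_def)
        qed
        show "(\<lambda>n. real q ^ 2 * o2 n) \<longlonglongrightarrow> 0" using tendsto_mult_right_zero[OF o2] by simp
      qed
      from tendsto_add[OF this tendsto_const[of "\<nu> x"]] show "(\<lambda>n. p n x) \<longlonglongrightarrow> \<nu> x" by simp
    next
      fix n x show "0 \<le> p n x" by (simp add: p_def)
    next
      fix x show "0 \<le> \<nu> x" by (rule Mstar_nonneg[OF nuM])
    qed (rule Gnu)
    define L where "L = (\<lambda>n. phi2 \<beta> \<kappa> q (p n) - B * D n - real (q*q) * (o2 n + o1 n))"
    have "L \<longlonglongrightarrow> phi2 \<beta> \<kappa> q \<nu> - B * 0 - real (q*q) * (0 + 0)"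
      unfolding L_def by (intro tendsto_intros plim D o1 o2)
    hence "L \<longlonglongrightarrow> phi2 \<beta> \<kappa> q \<nu>" by simp
    hence "eventually (\<lambda>n. phi2 \<beta> \<kappa> q \<nu> - \<epsilon> / 2 < L n) sequentially"
      by (rule order_tendstoD(1)) (use \<epsilon> in linarith)
    moreover have "eventually (\<lambda>n. L n \<le> ln (E n) / RN n) sequentially"
      using evgood
    proof (rule eventually_mono)
      fix n assume g: "good n"
      have n: "NN n > 0" using g by (simp add: good_def)
      have R: "RN n > 0" using n q0 by (simp add: RN_def)
      have "ln (E n) \<ge> RN n * phi2 \<beta> \<kappa> q (p n) - RN n * B * D n - real (q*q) * (1 + ln (RN n + 1))"
        using E2_lower[OF q b n M(1)[OF g] c, where K="K n" and \<kappa>=\<kappa>]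
        by (simp add: E_def RN_def D_def B_def p_def)
      hence "ln (E n) / RN n \<ge> (RN n * phi2 \<beta> \<kappa> q (p n) - RN n * B * D n - real (q*q) * (1 + ln (RN n + 1))) / RN n"
        using R by (simp add: divide_right_mono)
      also have "(RN n * phi2 \<beta> \<kappa> q (p n) - RN n * B * D n - real (q*q) * (1 + ln (RN n + 1))) / RN n = L n"
        using R by (simp add: L_def o1_def o2_def field_simps)
      finally show "L n \<le> ln (E n) / RN n" .
    qed
    ultimately show "eventually (\<lambda>n. a < ln (E n) / RN n) sequentially"
    proof eventually_elim
      case (elim n)
      have "a = phi2 \<beta> \<kappa> q \<mu> - \<epsilon>" by (simp add: \<epsilon>_def)
      also have "\<dots> < phi2 \<beta> \<kappa> q \<nu> - \<epsilon> / 2" using k by (simp add: \<nu>_def)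
      finally show ?case using elim by linarith
    qed
  qed
  thus ?thesis by (simp add: E_def RN_def)
qed

theorem mainTheorem13:
  fixes q :: nat and \<beta> c \<kappa> :: real
  assumes "q \<ge> 2" and "\<beta> \<ge> 0" and "c > 0" and "\<kappa> > 0"
  shows "(\<forall>NN K :: nat \<Rightarrow> nat.
            filterlim NN at_top sequentially \<and>
            ((\<lambda>n. real (K n) / real (NN n * q)) \<longlonglongrightarrow> \<kappa> / 2) \<longrightarrow>
            ((\<lambda>n. ln (cond_exp_J (NN n * q) c (K n) (Ztilde (NN n) q \<beta>)) / real (NN n * q))
               \<longlonglongrightarrow> Pfun \<beta> \<kappa> q))
       \<and> (\<exists>\<mu>\<in>Mstar q. (\<forall>\<nu>\<in>Mstar q. phi2 \<beta> \<kappa> q \<nu> \<le> phi2 \<beta> \<kappa> q \<mu>) \<and>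
          (\<forall>NN K :: nat \<Rightarrow> nat.
            filterlim NN at_top sequentially \<and>
            ((\<lambda>n. real (K n) / real (NN n * q)) \<longlonglongrightarrow> \<kappa> / 2) \<longrightarrow>
            ((\<lambda>n. ln (cond_exp_J (NN n * q) c (K n) (\<lambda>J. (Ztilde (NN n) q \<beta> J)^2)) / real (NN n * q))
               \<longlonglongrightarrow> phi2 \<beta> \<kappa> q \<mu>)))"
proof -
  have p1: "\<forall>NN K :: nat \<Rightarrow> nat.
            filterlim NN at_top sequentially \<and>
            ((\<lambda>n. real (K n) / real (NN n * q)) \<longlonglongrightarrow> \<kappa> / 2) \<longrightarrow>
            ((\<lambda>n. ln (cond_exp_J (NN n * q) c (K n) (Ztilde (NN n) q \<beta>)) / real (NN n * q))
               \<longlonglongrightarrow> Pfun \<beta> \<kappa> q)"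
    using part1[OF assms(1,2,3)] by blast
  obtain \<mu> where mu: "\<mu> \<in> Mstar q" and mx: "\<forall>\<nu>\<in>Mstar q. phi2 \<beta> \<kappa> q \<nu> \<le> phi2 \<beta> \<kappa> q \<mu>"
    using phi2_max[OF assms(1,2)] by blast
  have p2: "\<forall>NN K :: nat \<Rightarrow> nat.
            filterlim NN at_top sequentially \<and>
            ((\<lambda>n. real (K n) / real (NN n * q)) \<longlonglongrightarrow> \<kappa> / 2) \<longrightarrow>
            ((\<lambda>n. ln (cond_exp_J (NN n * q) c (K n) (\<lambda>J. (Ztilde (NN n) q \<beta> J)^2)) / real (NN n * q))
               \<longlonglongrightarrow> phi2 \<beta> \<kappa> q \<mu>)"
    using part2[OF assms(1,2,3) mu mx] by blast
  show ?thesis using p1 p2 mu mx by blast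
qed

end
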